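(* Let $n\ge2$ and $l,m\in\mathbb Z_{\ge0}$. An element $\phi\in\mathcal Z_n(l,m)$ is $\mathcal U_q(n-1)$-invariant if and only if it has the form $$\phi=\sum_{j=0}^{\min(l,m)}c_j\,z_n^{\,l-j}w_n^{\,m-j}Q_n^{\,j}\qquad(c_j\in\mathbb C).$$ In particular, the space of $\mathcal U_q(n-1)$-invariant elements of $\mathcal Z_n(l,m)$ has dimension $\min(l,m)+1$.
   Context: Fix $0<q<1$. $\mathcal Z_n$ is the unital complex $*$-algebra generated by $z_1,\dots,z_n,w_1,\dots,w_n$ subject to $z_iz_j=qz_jz_i$ $(i<j)$, $w_jw_i=qw_iw_j$ $(i<j)$, $w_iz_j=qz_jw_i$ $(i\ne j)$, $w_iz_i=z_iw_i+(1-q^2)\sum_{k<i}z_kw_k$, with involution $z_i^*=w_i$. $z^\lambda w^\mu=z_1^{\lambda_1}\cdots z_n^{\lambda_n}w_n^{\mu_n}\cdots w_1^{\mu_1}$ (a basis), $|\lambda|=\sum\lambda_i$, $Q_i=\sum_{k=1}^iz_kw_k$; $\mathcal Z_n(l,m)$ is the span of the $z^\lambda w^\mu$ with $|\lambda|=l,|\mu|=m$. Operators: for $h\in\mathbb Z^n$, $1\le k\le n-1$, unit vectors $\epsilon_i$, $\langle h,\lambda\rangle=\sum h_i\lambda_i$, $[a]_{q^{-2}}=(1-q^{-2a})/(1-q^{-2})$, terms with a negative exponent being $0$: $q^h.z^\lambda w^\mu=q^{\langle h,\lambda-\mu\rangle}z^\lambda w^\mu$; $f_k.z^\lambda w^\mu=-q^{\mu_k+1}[\mu_{k+1}]_{q^{-2}}z^\lambda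 w^{\mu-\epsilon_{k+1}+\epsilon_k}+q^{\lambda_{k+1}+\mu_k-\mu_{k+1}}[\lambda_k]_{q^{-2}}z^{\lambda-\epsilon_k+\epsilon_{k+1}}w^\mu$; $e_k.z^\lambda w^\mu=-q^{-1}q^{\mu_{k+1}+\lambda_k-\lambda_{k+1}}[\mu_k]_{q^{-2}}z^\lambda w^{\mu+\epsilon_{k+1}-\epsilon_k}+q^{\lambda_k}[\lambda_{k+1}]_{q^{-2}}z^{\lambda+\epsilon_k-\epsilon_{k+1}}w^\mu$. $\phi$ is $\mathcal U_q(n-p)$-invariant if $q^{\epsilon_i}.\phi=\phi$ ($1\le i\le n-p$) and $e_k.\phi=f_k.\phi=0$ ($1\le k\le n-p-1$). *)

theory Defs
  imports Complex_Main
begin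

text \<open>
  The algebra Z_n is represented abstractly: a ring 'a together with a central ring
  homomorphism sc from the complex numbers (making 'a a complex algebra), generators
  z i, w i (1 \<le> i \<le> n) satisfying the defining relations, and such that the ordered
  monomials z^lambda w^mu form a C-basis.  Any such algebra is isomorphic to Z_n.
  Multi-indices are functions nat \<Rightarrow> nat supported in {1..n}.
\<close>

definition mi :: "nat \<Rightarrow> (nat \<Rightarrow> nat) \<Rightarrow> bool" where
  "mi n la \<longleftrightarrow> (\<forall>i. (i = 0 \<or> n < i) \<longrightarrow> la i = 0)"

definition mono :: "(nat \<Rightarrow> 'a::ring_1) \<Rightarrow> (nat \<Rightarrow> 'a) \<Rightarrow> nat \<Rightarrow> (nat \<Rightarrow> nat) \<Rightarrow> (nat \<Rightarrow> nat) \<Rightarrow> 'a" where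
  "mono z w n la mu =
     prod_list (map (\<lambda>i. z i ^ la i) [1..<Suc n]) * prod_list (map (\<lambda>i. w i ^ mu i) (rev [1..<Suc n]))"

definition csupp :: "('b \<Rightarrow> complex) \<Rightarrow> 'b set" where
  "csupp c = {p. c p \<noteq> 0}"

definition good :: "nat \<Rightarrow> ((nat \<Rightarrow> nat) \<times> (nat \<Rightarrow> nat) \<Rightarrow> complex) \<Rightarrow> bool" where
  "good n c \<longleftrightarrow> finite (csupp c) \<and> (\<forall>p \<in> csupp c. mi n (fst p) \<and> mi n (snd p))"

definition lincomb :: "(complex \<Rightarrow> 'a::ring_1) \<Rightarrow> (nat \<Rightarrow> 'a) \<Rightarrow> (nat \<Rightarrow> 'a) \<Rightarrow> nat
     \<Rightarrow> ((nat \<Rightarrow> nat) \<times> (nat \<Rightarrow> nat) \<Rightarrow> complex) \<Rightarrow> 'a" where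
  "lincomb sc z w n c = (\<Sum>p\<in>csupp c. sc (c p) * mono z w n (fst p) (snd p))"

text \<open>The defining data of Z_n (with 0 < q < 1 given separately), including the PBW basis property.\<close>
definition Zn_alg :: "nat \<Rightarrow> real \<Rightarrow> (complex \<Rightarrow> 'a::ring_1) \<Rightarrow> (nat \<Rightarrow> 'a) \<Rightarrow> (nat \<Rightarrow> 'a) \<Rightarrow> bool" where
  "Zn_alg n q sc z w \<longleftrightarrow>
     (\<forall>a b. sc (a + b) = sc a + sc b) \<and> (\<forall>a b. sc (a * b) = sc a * sc b) \<and> sc 1 = 1 \<and>
     (\<forall>a x. sc a * x = x * sc a) \<and>
     (\<forall>i\<in>{1..n}. \<forall>j\<in>{1..n}. i < j \<longrightarrow> z i * z j = sc (of_real q) * z j * z i) \<and>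
     (\<forall>i\<in>{1..n}. \<forall>j\<in>{1..n}. i < j \<longrightarrow> w j * w i = sc (of_real q) * w i * w j) \<and>
     (\<forall>i\<in>{1..n}. \<forall>j\<in>{1..n}. i \<noteq> j \<longrightarrow> w i * z j = sc (of_real q) * z j * w i) \<and>
     (\<forall>i\<in>{1..n}. w i * z i = z i * w i + sc (of_real (1 - q\<^sup>2)) * (\<Sum>k\<in>{1..<i}. z k * w k)) \<and>
     (\<forall>x. \<exists>!c. good n c \<and> lincomb sc z w n c = x)"

definition coord :: "nat \<Rightarrow> (complex \<Rightarrow> 'a::ring_1) \<Rightarrow> (nat \<Rightarrow> 'a) \<Rightarrow> (nat \<Rightarrow> 'a) \<Rightarrow> 'a
     \<Rightarrow> ((nat \<Rightarrow> nat) \<times> (nat \<Rightarrow> nat) \<Rightarrow> complex)" where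
  "coord n sc z w x = (THE c. good n c \<and> lincomb sc z w n c = x)"

definition Q :: "(nat \<Rightarrow> 'a::ring_1) \<Rightarrow> (nat \<Rightarrow> 'a) \<Rightarrow> nat \<Rightarrow> 'a" where
  "Q z w i = (\<Sum>k\<in>{1..i}. z k * w k)"

definition deg :: "nat \<Rightarrow> (nat \<Rightarrow> nat) \<Rightarrow> nat" where
  "deg n la = (\<Sum>i\<in>{1..n}. la i)"

definition Zlm :: "nat \<Rightarrow> (complex \<Rightarrow> 'a::ring_1) \<Rightarrow> (nat \<Rightarrow> 'a) \<Rightarrow> (nat \<Rightarrow> 'a) \<Rightarrow> nat \<Rightarrow> nat \<Rightarrow> 'a set" where
  "Zlm n sc z w l m = {x. \<forall>p. coord n sc z w x p \<noteq> 0 \<longrightarrow> deg n (fst p) = l \<and> deg n (snd p) = m}"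

definition qbr :: "real \<Rightarrow> nat \<Rightarrow> real" where
  "qbr q a = (1 - q powi (- 2 * int a)) / (1 - q powi (- 2))"

definition act :: "nat \<Rightarrow> (complex \<Rightarrow> 'a::ring_1) \<Rightarrow> (nat \<Rightarrow> 'a) \<Rightarrow> (nat \<Rightarrow> 'a)
     \<Rightarrow> ((nat \<Rightarrow> nat) \<Rightarrow> (nat \<Rightarrow> nat) \<Rightarrow> 'a) \<Rightarrow> 'a \<Rightarrow> 'a" where
  "act n sc z w T x = (\<Sum>p\<in>csupp (coord n sc z w x). sc (coord n sc z w x p) * T (fst p) (snd p))"

definition qe_mono :: "nat \<Rightarrow> real \<Rightarrow> (complex \<Rightarrow> 'a::ring_1) \<Rightarrow> (nat \<Rightarrow> 'a) \<Rightarrow> (nat \<Rightarrow> 'a) \<Rightarrow> nat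
     \<Rightarrow> (nat \<Rightarrow> nat) \<Rightarrow> (nat \<Rightarrow> nat) \<Rightarrow> 'a" where
  "qe_mono n q sc z w i la mu = sc (of_real (q powi (int (la i) - int (mu i)))) * mono z w n la mu"

text \<open>f_k on monomials (terms with a negative exponent are 0)\<close>
definition f_mono :: "nat \<Rightarrow> real \<Rightarrow> (complex \<Rightarrow> 'a::ring_1) \<Rightarrow> (nat \<Rightarrow> 'a) \<Rightarrow> (nat \<Rightarrow> 'a) \<Rightarrow> nat
     \<Rightarrow> (nat \<Rightarrow> nat) \<Rightarrow> (nat \<Rightarrow> nat) \<Rightarrow> 'a" where
  "f_mono n q sc z w k la mu =
     (if mu (Suc k) = 0 then 0 else
        sc (of_real (- (q ^ (mu k + 1) * qbr q (mu (Suc k)))))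
          * mono z w n la (mu(Suc k := mu (Suc k) - 1, k := mu k + 1)))
   + (if la k = 0 then 0 else
        sc (of_real (q powi (int (la (Suc k)) + int (mu k) - int (mu (Suc k))) * qbr q (la k)))
          * mono z w n (la(k := la k - 1, Suc k := la (Suc k) + 1)) mu)"

text \<open>e_k on monomials (terms with a negative exponent are 0)\<close>
definition e_mono :: "nat \<Rightarrow> real \<Rightarrow> (complex \<Rightarrow> 'a::ring_1) \<Rightarrow> (nat \<Rightarrow> 'a) \<Rightarrow> (nat \<Rightarrow> 'a) \<Rightarrow> nat
     \<Rightarrow> (nat \<Rightarrow> nat) \<Rightarrow> (nat \<Rightarrow> nat) \<Rightarrow> 'a" where
  "e_mono n q sc z w k la mu =
     (if mu k = 0 then 0 else
        sc (of_real (- (inverse q * q powi (int (mu (Suc k)) + int (la k) - int (la (Suc k))) * qbr q (mu k))))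
          * mono z w n la (mu(Suc k := mu (Suc k) + 1, k := mu k - 1)))
   + (if la (Suc k) = 0 then 0 else
        sc (of_real (q ^ (la k) * qbr q (la (Suc k))))
          * mono z w n (la(k := la k + 1, Suc k := la (Suc k) - 1)) mu)"

definition Uinv :: "nat \<Rightarrow> real \<Rightarrow> (complex \<Rightarrow> 'a::ring_1) \<Rightarrow> (nat \<Rightarrow> 'a) \<Rightarrow> (nat \<Rightarrow> 'a) \<Rightarrow> nat \<Rightarrow> 'a \<Rightarrow> bool" where
  "Uinv n q sc z w p x \<longleftrightarrow>
     (\<forall>i\<in>{1..n-p}. act n sc z w (qe_mono n q sc z w i) x = x) \<and>
     (\<forall>k\<in>{1..n-p-1}. act n sc z w (e_mono n q sc z w k) x = 0 \<and> act n sc z w (f_mono n q sc z w k) x = 0)"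

end

theory Submission
  imports Defs
begin

lemma sum_focus:
  assumes "finite A" "finite B"
    and "\<And>x. x \<in> A \<Longrightarrow> f x \<noteq> 0 \<Longrightarrow> x \<in> B"
    and "\<And>x. x \<in> B \<Longrightarrow> x \<notin> A \<Longrightarrow> f x = 0"
  shows "sum f A = sum f B"
proof -
  have "sum f A = sum f (A \<inter> B)"
    by (rule sum.mono_neutral_right) (use assms in auto)
  also have "\<dots> = sum f B"
    by (rule sum.mono_neutral_left) (use assms in auto)
  finally show ?thesis .
qed

locale ZN =
  fixes n :: nat and q :: real and sc :: "complex \<Rightarrow> 'a::ring_1" and z w :: "nat \<Rightarrow> 'a"
  assumes q0: "0 < q" and q1: "q < 1" and n2: "2 \<le> n" and alg: "Zn_alg n q sc z w"
begin

lemmas algs = alg[unfolded Zn_alg_def]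

abbreviation "crd \<equiv> coord n sc z w"
abbreviation "lc \<equiv> lincomb sc z w n"
abbreviation "monop p \<equiv> Defs.mono z w n (fst p) (snd p)"

lemma sc_add: "sc (a + b) = sc a + sc b" using algs[THEN conjunct1] by blast
lemma sc_mult: "sc (a * b) = sc a * sc b" using algs[THEN conjunct2, THEN conjunct1] by blast
lemma sc_1[simp]: "sc 1 = 1" using algs[THEN conjunct2, THEN conjunct2, THEN conjunct1] by blast
lemma sc_comm: "sc a * x = x * sc a" using algs[THEN conjunct2, THEN conjunct2, THEN conjunct2, THEN conjunct1] by blast
lemma sc_0[simp]: "sc 0 = 0"
  using sc_add[of 0 0] by simp
lemma sc_uminus: "sc (- a) = - sc a"
proof -
  have "sc a + sc (-a) = 0" using sc_add[of a "-a"] by simp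
  from add.inverse_unique[OF this] show ?thesis by simp
qed
lemma sc_diff: "sc (a - b) = sc a - sc b"
  using sc_add[of a "-b"] sc_uminus[of b] by simp
lemma sc_sum: "sc (sum f A) = (\<Sum>x\<in>A. sc (f x))"
  by (induction A rule: infinite_finite_induct) (simp_all add: sc_add)
lemma sc_power: "sc (a ^ k) = sc a ^ k"
  by (induction k) (simp_all add: sc_mult)
lemma sc_left: "sc a * (sc b * x) = sc (a * b) * x"
  by (simp add: sc_mult mult.assoc)

lemma rel_zz: "i \<in> {1..n} \<Longrightarrow> j \<in> {1..n} \<Longrightarrow> i < j \<Longrightarrow> z i * z j = sc (of_real q) * z j * z i"
  using algs[THEN conjunct2, THEN conjunct2, THEN conjunct2, THEN conjunct2, THEN conjunct1] by blast
lemma rel_ww: "i \<in> {1..n} \<Longrightarrow> j \<in> {1..n} \<Longrightarrow> i < j \<Longrightarrow> w j * w i = sc (of_real q) * w i * w j"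
  using algs[THEN conjunct2, THEN conjunct2, THEN conjunct2, THEN conjunct2, THEN conjunct2, THEN conjunct1] by blast
lemma rel_wz: "i \<in> {1..n} \<Longrightarrow> j \<in> {1..n} \<Longrightarrow> i \<noteq> j \<Longrightarrow> w i * z j = sc (of_real q) * z j * w i"
  using algs[THEN conjunct2, THEN conjunct2, THEN conjunct2, THEN conjunct2, THEN conjunct2, THEN conjunct2, THEN conjunct1] by blast
lemma rel_wzi: "i \<in> {1..n} \<Longrightarrow> w i * z i = z i * w i + sc (of_real (1 - q\<^sup>2)) * (\<Sum>k\<in>{1..<i}. z k * w k)"
  using algs[THEN conjunct2, THEN conjunct2, THEN conjunct2, THEN conjunct2, THEN conjunct2, THEN conjunct2, THEN conjunct2, THEN conjunct1] by blast
lemma pbw: "\<exists>!c. good n c \<and> lincomb sc z w n c = x"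
  using algs[THEN conjunct2, THEN conjunct2, THEN conjunct2, THEN conjunct2, THEN conjunct2, THEN conjunct2, THEN conjunct2, THEN conjunct2] by blast

lemma coord_lincomb: "good n c \<Longrightarrow> crd (lc c) = c"
  unfolding coord_def by (rule the1_equality[OF pbw]) simp

lemma coord_good: "good n (crd x)" and lincomb_coord: "lc (crd x) = x"
  using theI'[OF pbw[of x]] unfolding coord_def by auto

lemma coord_inj: "crd x = crd y \<Longrightarrow> x = y"
  by (metis lincomb_coord)

lemma coord_mi:
  assumes "crd x p \<noteq> 0" shows "mi n (fst p) \<and> mi n (snd p)"
proof -
  have H: "\<forall>p\<in>csupp (crd x). mi n (fst p) \<and> mi n (snd p)" by (metis coord_good good_def)
  have "p \<in> csupp (crd x)" using assms by (simp add: csupp_def)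
  then show ?thesis using H by blast
qed

lemma finite_coord: "finite (csupp (crd x))"
  using coord_good[of x] by (auto simp: good_def)

lemma lincomb_superset: "finite F \<Longrightarrow> csupp c \<subseteq> F \<Longrightarrow> lc c = (\<Sum>p\<in>F. sc (c p) * monop p)"
  unfolding lincomb_def by (rule sum.mono_neutral_left) (auto simp: csupp_def)

lemma coord_sum_gen:
  assumes fin: "finite S" and mis: "\<And>p. p \<in> S \<Longrightarrow> h p \<noteq> 0 \<Longrightarrow> mi n (fst (T p)) \<and> mi n (snd (T p))"
  shows "crd (\<Sum>p\<in>S. sc (h p) * monop (T p)) = (\<lambda>t. \<Sum>p\<in>{p\<in>S. T p = t}. h p)"
proof -
  define g where "g t = (\<Sum>p\<in>{p\<in>S. T p = t}. h p)" for t
  have nz: "\<exists>p\<in>S. T p = t \<and> h p \<noteq> 0" if "g t \<noteq> 0" for t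
  proof (rule ccontr)
    assume "\<not> ?thesis"
    then have "g t = 0" unfolding g_def by (intro sum.neutral) auto
    with that show False by simp
  qed
  have sup: "csupp g \<subseteq> T ` S"
  proof
    fix t assume "t \<in> csupp g"
    then have "g t \<noteq> 0" by (simp add: csupp_def)
    then obtain p where "p \<in> S" "T p = t" using nz by (metis prod.collapse)
    then show "t \<in> T ` S" by blast
  qed
  have good: "good n g"
    unfolding good_def
  proof
    show "finite (csupp g)" using sup fin finite_subset by blast
    show "\<forall>t\<in>csupp g. mi n (fst t) \<and> mi n (snd t)"
    proof
      fix t assume "t \<in> csupp g"
      then have "g t \<noteq> 0" by (simp add: csupp_def)
      then obtain p where "p \<in> S" "T p = t" "h p \<noteq> 0" using nz by (metis prod.collapse)
      then show "mi n (fst t) \<and> mi n (snd t)" using mis by blast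
    qed
  qed
  have "lc g = (\<Sum>t\<in>T ` S. sc (g t) * monop t)"
    by (rule lincomb_superset) (use sup fin in auto)
  also have "\<dots> = (\<Sum>t\<in>T ` S. \<Sum>p\<in>{p\<in>S. T p = t}. sc (h p) * monop (T p))"
  proof (rule sum.cong[OF refl])
    fix t assume "t \<in> T ` S"
    have "sc (g t) * monop t = (\<Sum>p\<in>{p\<in>S. T p = t}. sc (h p)) * monop t"
      by (simp only: g_def sc_sum)
    also have "\<dots> = (\<Sum>p\<in>{p\<in>S. T p = t}. sc (h p) * monop t)"
      by (rule sum_distrib_right)
    also have "\<dots> = (\<Sum>p\<in>{p\<in>S. T p = t}. sc (h p) * monop (T p))"
      by (rule sum.cong) auto
    finally show "sc (g t) * monop t = (\<Sum>p\<in>{p\<in>S. T p = t}. sc (h p) * monop (T p))" .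
  qed
  also have "\<dots> = (\<Sum>p\<in>S. sc (h p) * monop (T p))"
    by (rule sum.image_gen[symmetric]) (rule fin)
  finally have "lc g = (\<Sum>p\<in>S. sc (h p) * monop (T p))" .
  then have "crd (\<Sum>p\<in>S. sc (h p) * monop (T p)) = g"
    using coord_lincomb[OF good] by simp
  moreover have "g = (\<lambda>t. \<Sum>p\<in>{p\<in>S. T p = t}. h p)" by (rule ext) (simp add: g_def)
  ultimately show ?thesis by simp
qed

lemma coord_add: "crd (x + y) = (\<lambda>p. crd x p + crd y p)"
proof -
  define c where "c p = crd x p + crd y p" for p
  define F where "F = csupp (crd x) \<union> csupp (crd y)"
  have finF: "finite F" using finite_coord F_def by simp
  have supc: "csupp c \<subseteq> F" by (auto simp: c_def F_def csupp_def)
  have good: "good n c" unfolding good_def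
  proof
    show "finite (csupp c)" using supc finF finite_subset by blast
    show "\<forall>p\<in>csupp c. mi n (fst p) \<and> mi n (snd p)"
    proof
      fix p assume "p \<in> csupp c"
      then have "crd x p \<noteq> 0 \<or> crd y p \<noteq> 0" by (auto simp: csupp_def c_def)
      then show "mi n (fst p) \<and> mi n (snd p)" using coord_mi by blast
    qed
  qed
  have "lc c = (\<Sum>p\<in>F. sc (c p) * monop p)" by (rule lincomb_superset[OF finF supc])
  also have "\<dots> = (\<Sum>p\<in>F. sc (crd x p) * monop p) + (\<Sum>p\<in>F. sc (crd y p) * monop p)"
    by (simp add: c_def sc_add distrib_right sum.distrib)
  also have "\<dots> = x + y"
    using lincomb_superset[OF finF, of "crd x"] lincomb_superset[OF finF, of "crd y"]
    by (simp add: F_def lincomb_coord)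
  finally show ?thesis using coord_lincomb[OF good] by (simp add: c_def[abs_def])
qed

lemma coord_scale: "crd (sc a * x) = (\<lambda>p. a * crd x p)"
proof -
  define c where "c p = a * crd x p" for p
  define F where "F = csupp (crd x)"
  have finF: "finite F" using finite_coord F_def by simp
  have supc: "csupp c \<subseteq> F" by (auto simp: c_def F_def csupp_def)
  have good: "good n c" unfolding good_def
  proof
    show "finite (csupp c)" using supc finF finite_subset by blast
    show "\<forall>p\<in>csupp c. mi n (fst p) \<and> mi n (snd p)"
    proof
      fix p assume "p \<in> csupp c"
      then have "crd x p \<noteq> 0" by (auto simp: csupp_def c_def)
      then show "mi n (fst p) \<and> mi n (snd p)" using coord_mi by blast
    qed
  qed
  have "lc c = (\<Sum>p\<in>F. sc (c p) * monop p)" by (rule lincomb_superset[OF finF supc])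
  also have "\<dots> = sc a * (\<Sum>p\<in>F. sc (crd x p) * monop p)"
    by (simp add: c_def sc_mult sum_distrib_left mult.assoc)
  also have "\<dots> = sc a * x"
    using lincomb_superset[OF finF, of "crd x"] by (simp add: F_def lincomb_coord)
  finally show ?thesis using coord_lincomb[OF good] by (simp add: c_def[abs_def])
qed

lemma coord_zero: "crd 0 = (\<lambda>p. 0)"
proof -
  have "good n (\<lambda>p. 0)" by (simp add: good_def csupp_def)
  moreover have "lc (\<lambda>p. 0) = 0" by (simp add: lincomb_def csupp_def)
  ultimately show ?thesis using coord_lincomb by metis
qed

lemma coord_eq_0_iff: "crd x = (\<lambda>p. 0) \<longleftrightarrow> x = 0"
  using coord_inj coord_zero by metis

lemma coord_sum: "crd (\<Sum>j\<in>J. f j) = (\<lambda>p. \<Sum>j\<in>J. crd (f j) p)"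
  by (induction J rule: infinite_finite_induct) (simp_all add: coord_zero coord_add)

end

context ZN begin
lemma coord_act2:
  assumes T: "\<And>p. T (fst p) (snd p) =
      (if cc p then sc (aa p) * monop (mm p) else 0) + (if dd p then sc (bb p) * monop (nn p) else 0)"
    and mi1: "\<And>p. mi n (fst p) \<Longrightarrow> mi n (snd p) \<Longrightarrow> cc p \<Longrightarrow> mi n (fst (mm p)) \<and> mi n (snd (mm p))"
    and mi2: "\<And>p. mi n (fst p) \<Longrightarrow> mi n (snd p) \<Longrightarrow> dd p \<Longrightarrow> mi n (fst (nn p)) \<and> mi n (snd (nn p))"
    and inv1: "\<And>p. cc p \<Longrightarrow> icc (mm p) \<and> p = ii (mm p)"
    and inv1': "\<And>t. icc t \<Longrightarrow> cc (ii t) \<and> mm (ii t) = t"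
    and inv2: "\<And>p. dd p \<Longrightarrow> idd (nn p) \<and> p = jj (nn p)"
    and inv2': "\<And>t. idd t \<Longrightarrow> dd (jj t) \<and> nn (jj t) = t"
  shows "crd (act n sc z w T x) t =
     (if icc t then crd x (ii t) * aa (ii t) else 0) + (if idd t then crd x (jj t) * bb (jj t) else 0)"
proof -
  define d where "d = crd x"
  define S where "S = csupp d"
  have finS: "finite S" using finite_coord by (simp add: S_def d_def)
  define h1 where "h1 p = (if cc p then d p * aa p else 0)" for p
  define h2 where "h2 p = (if dd p then d p * bb p else 0)" for p
  have "act n sc z w T x = (\<Sum>p\<in>S. sc (d p) * T (fst p) (snd p))"
    by (simp add: act_def S_def d_def)
  also have "\<dots> = (\<Sum>p\<in>S. sc (h1 p) * monop (mm p) + sc (h2 p) * monop (nn p))"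
    by (intro sum.cong refl) (simp add: T h1_def h2_def distrib_left sc_mult mult.assoc)
  also have "\<dots> = (\<Sum>p\<in>S. sc (h1 p) * monop (mm p)) + (\<Sum>p\<in>S. sc (h2 p) * monop (nn p))"
    by (simp add: sum.distrib)
  finally have actx: "act n sc z w T x = \<dots>" .
  have miS: "mi n (fst p) \<and> mi n (snd p)" if "p \<in> S" for p
    using that coord_mi by (auto simp: S_def d_def csupp_def)
  have C1: "crd (\<Sum>p\<in>S. sc (h1 p) * monop (mm p)) t = (if icc t then d (ii t) * aa (ii t) else 0)"
  proof -
    have "crd (\<Sum>p\<in>S. sc (h1 p) * monop (mm p)) t = (\<Sum>p\<in>{p\<in>S. mm p = t}. h1 p)"
      by (subst coord_sum_gen[OF finS]) (use miS mi1 in \<open>auto simp: h1_def split: if_splits\<close>)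
    also have "\<dots> = sum h1 (if icc t then {ii t} else {})"
    proof (rule sum_focus)
      show "finite {p \<in> S. mm p = t}" using finS by simp
      show "finite (if icc t then {ii t} else {})" by simp
      show "x \<in> (if icc t then {ii t} else {})" if "x \<in> {p \<in> S. mm p = t}" "h1 x \<noteq> 0" for x
        using that inv1[of x] by (auto simp: h1_def split: if_splits)
      show "h1 x = 0" if "x \<in> (if icc t then {ii t} else {})" "x \<notin> {p \<in> S. mm p = t}" for x
        using that inv1'[of t] by (auto simp: h1_def S_def csupp_def split: if_splits)
    qed
    also have "\<dots> = (if icc t then d (ii t) * aa (ii t) else 0)"
      using inv1' by (simp add: h1_def)
    finally show ?thesis .
  qed
  have C2: "crd (\<Sum>p\<in>S. sc (h2 p) * monop (nn p)) t = (if idd t then d (jj t) * bb (jj t) else 0)"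
  proof -
    have "crd (\<Sum>p\<in>S. sc (h2 p) * monop (nn p)) t = (\<Sum>p\<in>{p\<in>S. nn p = t}. h2 p)"
      by (subst coord_sum_gen[OF finS]) (use miS mi2 in \<open>auto simp: h2_def split: if_splits\<close>)
    also have "\<dots> = sum h2 (if idd t then {jj t} else {})"
    proof (rule sum_focus)
      show "finite {p \<in> S. nn p = t}" using finS by simp
      show "finite (if idd t then {jj t} else {})" by simp
      show "x \<in> (if idd t then {jj t} else {})" if "x \<in> {p \<in> S. nn p = t}" "h2 x \<noteq> 0" for x
        using that inv2[of x] by (auto simp: h2_def split: if_splits)
      show "h2 x = 0" if "x \<in> (if idd t then {jj t} else {})" "x \<notin> {p \<in> S. nn p = t}" for x
        using that inv2'[of t] by (auto simp: h2_def S_def csupp_def split: if_splits)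
    qed
    also have "\<dots> = (if idd t then d (jj t) * bb (jj t) else 0)"
      using inv2' by (simp add: h2_def)
    finally show ?thesis .
  qed
  show ?thesis unfolding actx coord_add using C1 C2 by (simp add: d_def)
qed

end

context ZN begin

lemma mi_upd: "mi n r \<Longrightarrow> 1 \<le> j \<Longrightarrow> j \<le> n \<Longrightarrow> mi n (r(j := a))"
  by (auto simp: mi_def)

lemma coord_f:
  assumes k: "1 \<le> k" "Suc k < n"
  shows "crd (act n sc z w (f_mono n q sc z w k) x) t =
    (if snd t k \<noteq> 0 then crd x (fst t, (snd t)(k := snd t k - 1, Suc k := snd t (Suc k) + 1))
        * of_real (- (q ^ (snd t k - 1 + 1) * qbr q (snd t (Suc k) + 1))) else 0) +
    (if fst t (Suc k) \<noteq> 0 then crd x ((fst t)(k := fst t k + 1, Suc k := fst t (Suc k) - 1), snd t)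
        * of_real (q powi (int (fst t (Suc k) - 1) + int (snd t k) - int (snd t (Suc k))) * qbr q (fst t k + 1)) else 0)"
  using k
  apply (intro trans[OF coord_act2[where
      cc = "\<lambda>p. snd p (Suc k) \<noteq> 0" and
      aa = "\<lambda>p. of_real (- (q ^ (snd p k + 1) * qbr q (snd p (Suc k))))" and
      mm = "\<lambda>p. (fst p, (snd p)(Suc k := snd p (Suc k) - 1, k := snd p k + 1))" and
      icc = "\<lambda>t. snd t k \<noteq> 0" and
      ii = "\<lambda>t. (fst t, (snd t)(k := snd t k - 1, Suc k := snd t (Suc k) + 1))" and
      dd = "\<lambda>p. fst p k \<noteq> 0" and
      bb = "\<lambda>p. of_real (q powi (int (fst p (Suc k)) + int (snd p k) - int (snd p (Suc k))) * qbr q (fst p k))" and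
      nn = "\<lambda>p. ((fst p)(k := fst p k - 1, Suc k := fst p (Suc k) + 1), snd p)" and
      idd = "\<lambda>t. fst t (Suc k) \<noteq> 0" and
      jj = "\<lambda>t. ((fst t)(k := fst t k + 1, Suc k := fst t (Suc k) - 1), snd t)"]])
  apply (simp_all add: f_mono_def mi_upd fun_eq_iff)
  done


lemma coord_e:
  assumes k: "1 \<le> k" "Suc k < n"
  shows "crd (act n sc z w (e_mono n q sc z w k) x) t =
    (if snd t (Suc k) \<noteq> 0 then crd x (fst t, (snd t)(k := snd t k + 1, Suc k := snd t (Suc k) - 1))
        * of_real (- (inverse q * q powi (int (snd t (Suc k) - 1) + int (fst t k) - int (fst t (Suc k))) * qbr q (snd t k + 1))) else 0) +
    (if fst t k \<noteq> 0 then crd x ((fst t)(k := fst t k - 1, Suc k := fst t (Suc k) + 1), snd t)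
        * of_real (q ^ (fst t k - 1) * qbr q (fst t (Suc k) + 1)) else 0)"
  using k
  apply (intro trans[OF coord_act2[where
      cc = "\<lambda>p. snd p k \<noteq> 0" and
      aa = "\<lambda>p. of_real (- (inverse q * q powi (int (snd p (Suc k)) + int (fst p k) - int (fst p (Suc k))) * qbr q (snd p k)))" and
      mm = "\<lambda>p. (fst p, (snd p)(Suc k := snd p (Suc k) + 1, k := snd p k - 1))" and
      icc = "\<lambda>t. snd t (Suc k) \<noteq> 0" and
      ii = "\<lambda>t. (fst t, (snd t)(k := snd t k + 1, Suc k := snd t (Suc k) - 1))" and
      dd = "\<lambda>p. fst p (Suc k) \<noteq> 0" and
      bb = "\<lambda>p. of_real (q ^ (fst p k) * qbr q (fst p (Suc k)))" and
      nn = "\<lambda>p. ((fst p)(k := fst p k + 1, Suc k := fst p (Suc k) - 1), snd p)" and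
      idd = "\<lambda>t. fst t k \<noteq> 0" and
      jj = "\<lambda>t. ((fst t)(k := fst t k - 1, Suc k := fst t (Suc k) + 1), snd t)"]])
  apply (simp_all add: e_mono_def mi_upd fun_eq_iff)
  done

lemma coord_qe:
  "crd (act n sc z w (qe_mono n q sc z w i) x) t = crd x t * of_real (q powi (int (fst t i) - int (snd t i)))"
  apply (intro trans[OF coord_act2[where
      cc = "\<lambda>p. True" and
      aa = "\<lambda>p. of_real (q powi (int (fst p i) - int (snd p i)))" and
      mm = "\<lambda>p. p" and icc = "\<lambda>t. True" and ii = "\<lambda>t. t" and
      dd = "\<lambda>p. False" and bb = "\<lambda>p. 0" and nn = "\<lambda>p. p" and
      idd = "\<lambda>t. False" and jj = "\<lambda>t. t"]])
  apply (simp_all add: qe_mono_def)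
  done

end

lemma sum_upd2:
  fixes f :: "'b \<Rightarrow> 'c::comm_monoid_add"
  assumes "finite A" "a \<in> A" "b \<in> A" "a \<noteq> b"
  shows "sum (f(a := u, b := v)) A + f a + f b = sum f A + u + v"
proof -
  have r1: "sum g A = g a + (g b + sum g (A - {a} - {b}))" for g :: "'b \<Rightarrow> 'c"
    using assms by (simp add: sum.remove[of A a] sum.remove[of "A - {a}" b])
  have "sum (f(a := u, b := v)) (A - {a} - {b}) = sum f (A - {a} - {b})"
    by (rule sum.cong) auto
  then show ?thesis using assms r1[of f] r1[of "f(a := u, b := v)"] by (simp add: ac_simps)
qed

lemma prod_upd2:
  fixes f :: "'b \<Rightarrow> 'c::comm_monoid_mult"
  assumes "finite A" "a \<in> A" "b \<in> A" "a \<noteq> b"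
  shows "prod (f(a := u, b := v)) A * f a * f b = prod f A * u * v"
proof -
  have r1: "prod g A = g a * (g b * prod g (A - {a} - {b}))" for g :: "'b \<Rightarrow> 'c"
    using assms by (simp add: prod.remove[of A a] prod.remove[of "A - {a}" b])
  have "prod (f(a := u, b := v)) (A - {a} - {b}) = prod f (A - {a} - {b})"
    by (rule prod.cong) auto
  then show ?thesis using assms r1[of f] r1[of "f(a := u, b := v)"] by (simp add: ac_simps)
qed

definition mv :: "nat \<Rightarrow> (nat \<Rightarrow> nat) \<Rightarrow> nat \<Rightarrow> nat" where
  "mv k r = r(k := r k + 1, Suc k := r (Suc k) - 1)"
definition mvb :: "nat \<Rightarrow> (nat \<Rightarrow> nat) \<Rightarrow> nat \<Rightarrow> nat" where
  "mvb k r = r(k := r k - 1, Suc k := r (Suc k) + 1)"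

lemma mv_mvb: "r k \<noteq> 0 \<Longrightarrow> mv k (mvb k r) = r"
  by (auto simp: mv_def mvb_def fun_eq_iff)
lemma mvb_mv: "r (Suc k) \<noteq> 0 \<Longrightarrow> mvb k (mv k r) = r"
  by (auto simp: mv_def mvb_def fun_eq_iff)
lemma mv_k[simp]: "mv k r k = r k + 1" by (simp add: mv_def)
lemma mv_Sk[simp]: "mv k r (Suc k) = r (Suc k) - 1" by (simp add: mv_def)
lemma mv_other[simp]: "i \<noteq> k \<Longrightarrow> i \<noteq> Suc k \<Longrightarrow> mv k r i = r i" by (simp add: mv_def)
lemma mvb_k[simp]: "mvb k r k = r k - 1" by (simp add: mvb_def)
lemma mvb_Sk[simp]: "mvb k r (Suc k) = r (Suc k) + 1" by (simp add: mvb_def)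
lemma mvb_other[simp]: "i \<noteq> k \<Longrightarrow> i \<noteq> Suc k \<Longrightarrow> mvb k r i = r i" by (simp add: mvb_def)

lemma qbr_eq: "0 < q \<Longrightarrow> qbr q a = (1 - (inverse q ^ 2) ^ a) / (1 - inverse q ^ 2)"
proof -
  assume q: "0 < q"
  have "q powi (- 2 * int a) = (inverse q ^ 2) ^ a"
    by (simp add: power_int_def nat_mult_distrib power_mult)
  moreover have "q powi (- 2) = inverse q ^ 2"
    by (simp add: power_int_def)
  ultimately show ?thesis by (simp add: qbr_def)
qed

lemma qbr_pos: assumes "0 < q" "q < 1" "1 \<le> a" shows "0 < qbr q a"
proof -
  have r: "1 < inverse q ^ 2" using assms by (simp add: one_less_inverse one_less_power)
  have "1 < (inverse q ^ 2) ^ a" using r assms(3) by (simp add: one_less_power)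
  then show ?thesis using r qbr_eq[OF assms(1)] by (simp add: divide_neg_neg)
qed

lemma qbr_add: assumes "0 < q" "q < 1"
  shows "qbr q (a + b) = qbr q a + (inverse q ^ 2) ^ a * qbr q b"
proof -
  define r where "r = inverse q ^ 2"
  have "(1 - r ^ (a + b)) / (1 - r) = ((1 - r ^ a) + r ^ a * (1 - r ^ b)) / (1 - r)"
    by (simp add: power_add algebra_simps)
  also have "\<dots> = (1 - r ^ a) / (1 - r) + r ^ a * ((1 - r ^ b) / (1 - r))"
    by (simp add: add_divide_distrib)
  finally show ?thesis unfolding qbr_eq[OF assms(1)] r_def .
qed

lemma powi_eq_1: fixes q :: real assumes "0 < q" "q < 1" "q powi d = 1" shows "d = 0"
proof (rule ccontr)
  assume d: "d \<noteq> 0"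
  show False
  proof (cases "d > 0")
    case True
    then have "q powi d = q ^ nat d" by (simp add: power_int_def)
    moreover have "q ^ nat d < 1"
    proof -
      have "nat d = Suc (nat d - 1)" using True by simp
      then have "q ^ nat d = q ^ Suc (nat d - 1)" by simp
      also have "\<dots> < 1" by (intro power_Suc_less_one) (use assms in auto)
      finally show ?thesis .
    qed
    ultimately show False using assms by simp
  next
    case False
    then have "q powi d = inverse q ^ nat (- d)" using d by (simp add: power_int_def)
    moreover have "1 < inverse q ^ nat (- d)" using False d assms
      by (intro one_less_power) (auto simp: one_less_inverse)
    ultimately show False using assms by simp
  qed
qed

context ZN begin

definition inD :: "nat \<Rightarrow> nat \<Rightarrow> (nat \<Rightarrow> nat) \<times> (nat \<Rightarrow> nat) \<Rightarrow> bool" where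
  "inD l m p \<longleftrightarrow> mi n (fst p) \<and> mi n (snd p) \<and> (\<forall>i\<in>{1..<n}. fst p i = snd p i)
      \<and> deg n (fst p) = l \<and> deg n (snd p) = m"
definition sl :: "(nat \<Rightarrow> nat) \<Rightarrow> nat" where "sl r = (\<Sum>i\<in>{1..<n}. r i)"
definition qf :: "nat \<Rightarrow> real" where "qf a = (\<Prod>i\<in>{1..a}. qbr q i)"
definition Wt :: "(nat \<Rightarrow> nat) \<Rightarrow> real" where "Wt r = (\<Prod>i\<in>{1..<n}. qf (r i))"
definition Phi :: "(nat \<Rightarrow> nat) \<Rightarrow> nat" where "Phi r = (\<Sum>i\<in>{1..<n}. (i - 1) * r i)"

lemma qbr_pos': "1 \<le> a \<Longrightarrow> 0 < qbr q a" using qbr_pos q0 q1 by blast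
lemma qbr_nz: "a \<noteq> 0 \<Longrightarrow> qbr q a \<noteq> 0" using qbr_pos' by (metis less_irrefl less_one not_le)
lemma qf_pos: "0 < qf a" unfolding qf_def by (rule prod_pos) (auto intro: qbr_pos')
lemma qf_Suc: "qf (Suc a) = qf a * qbr q (Suc a)" by (simp add: qf_def)
lemma Wt_pos: "0 < Wt r" unfolding Wt_def by (rule prod_pos) (auto intro: qf_pos)

lemma deg_split: "deg n r = sl r + r n"
  using n2 by (simp add: deg_def sl_def atLeastLessThanSuc_atLeastAtMost[symmetric] )

context fixes k assumes k: "1 \<le> k" "Suc k < n"
begin

lemma kin: "k \<in> {1..<n}" "Suc k \<in> {1..<n}" "k \<in> {1..n}" "Suc k \<in> {1..n}" using k by auto

lemma mi_mv: "mi n r \<Longrightarrow> mi n (mv k r)" using k by (auto simp: mi_def mv_def)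
lemma mi_mvb: "mi n r \<Longrightarrow> mi n (mvb k r)" using k by (auto simp: mi_def mvb_def)

lemma deg_mv: "r (Suc k) \<noteq> 0 \<Longrightarrow> deg n (mv k r) = deg n r"
  using sum_upd2[of "{1..n}" k "Suc k" r "r k + 1" "r (Suc k) - 1"] kin
  unfolding deg_def mv_def by simp
lemma deg_mvb: "r k \<noteq> 0 \<Longrightarrow> deg n (mvb k r) = deg n r"
  using sum_upd2[of "{1..n}" k "Suc k" r "r k - 1" "r (Suc k) + 1"] kin
  unfolding deg_def mvb_def by simp
lemma sl_mv: "r (Suc k) \<noteq> 0 \<Longrightarrow> sl (mv k r) = sl r"
  using sum_upd2[of "{1..<n}" k "Suc k" r "r k + 1" "r (Suc k) - 1"] kin
  unfolding sl_def mv_def by simp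
lemma sl_mvb: "r k \<noteq> 0 \<Longrightarrow> sl (mvb k r) = sl r"
  using sum_upd2[of "{1..<n}" k "Suc k" r "r k - 1" "r (Suc k) + 1"] kin
  unfolding sl_def mvb_def by simp

lemma Phi_mv: assumes "r (Suc k) \<noteq> 0" shows "Phi (mv k r) + 1 = Phi r"
proof -
  obtain k' where kk: "k = Suc k'" using k by (cases k) auto
  obtain s where ss: "r (Suc k) = Suc s" using assms by (cases "r (Suc k)") auto
  let ?f = "\<lambda>i. (i - 1) * r i"
  have fe: "(\<lambda>i. (i - 1) * mv k r i) = ?f(k := k' * r k + k', Suc k := k * s)"
    using kk ss by (auto simp: mv_def fun_eq_iff)
  have h: "sum (?f(k := k' * r k + k', Suc k := k * s)) {1..<n} + ?f k + ?f (Suc k)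
      = sum ?f {1..<n} + (k' * r k + k') + k * s"
    by (rule sum_upd2) (use kin in auto)
  have a1: "?f k = k' * r k" by (simp add: kk)
  have a2: "?f (Suc k) = k * Suc s" by (simp add: ss)
  have a: "?f k = k' * r k" "?f (Suc k) = k + k * s" using a1 a2 by simp_all
  have "Phi (mv k r) = sum (?f(k := k' * r k + k', Suc k := k * s)) {1..<n}"
    unfolding Phi_def fe ..
  moreover have "Phi r = sum ?f {1..<n}" unfolding Phi_def ..
  ultimately show ?thesis using h a kk by linarith
qed

lemma Wt_mv: assumes "r (Suc k) \<noteq> 0" shows "Wt (mv k r) * qbr q (r (Suc k)) = Wt r * qbr q (r k + 1)"
proof -
  let ?f = "\<lambda>i. qf (r i)"
  have "(\<lambda>i. qf (mv k r i)) = ?f(k := qf (r k + 1), Suc k := qf (r (Suc k) - 1))"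
    by (auto simp: mv_def fun_eq_iff)
  note fe = this
  have h: "prod (?f(k := qf (r k + 1), Suc k := qf (r (Suc k) - 1))) {1..<n} * ?f k * ?f (Suc k)
      = prod ?f {1..<n} * qf (r k + 1) * qf (r (Suc k) - 1)"
    by (rule prod_upd2) (use kin in auto)
  have "Wt (mv k r) = prod (?f(k := qf (r k + 1), Suc k := qf (r (Suc k) - 1))) {1..<n}"
    unfolding Wt_def fe ..
  then have e: "Wt (mv k r) * qf (r k) * qf (r (Suc k)) = Wt r * qf (r k + 1) * qf (r (Suc k) - 1)"
    using h unfolding Wt_def by simp
  obtain s where s: "r (Suc k) = Suc s" using assms by (cases "r (Suc k)") auto
  have "Wt (mv k r) * qbr q (r (Suc k)) * (qf (r k) * qf s) = Wt r * qbr q (r k + 1) * (qf (r k) * qf s)"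
    using e unfolding s by (simp add: qf_Suc algebra_simps)
  moreover have "qf (r k) * qf s \<noteq> 0" using qf_pos by (simp add: less_imp_neq[symmetric])
  ultimately show ?thesis by simp
qed

lemma Wt_mvb: assumes "r k \<noteq> 0" shows "Wt r * qbr q (r (Suc k) + 1) = Wt (mvb k r) * qbr q (r k)"
  using Wt_mv[of "mvb k r"] mv_mvb[of r k, OF assms] assms by simp

end
end

context ZN begin

lemma coord_f':
  assumes "1 \<le> k" "Suc k < n"
  shows "crd (act n sc z w (f_mono n q sc z w k) x) t =
    (if snd t k \<noteq> 0 then crd x (fst t, mvb k (snd t))
        * of_real (- (q ^ (snd t k - 1 + 1) * qbr q (snd t (Suc k) + 1))) else 0) +
    (if fst t (Suc k) \<noteq> 0 then crd x (mv k (fst t), snd t)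
        * of_real (q powi (int (fst t (Suc k) - 1) + int (snd t k) - int (snd t (Suc k))) * qbr q (fst t k + 1)) else 0)"
  using coord_f[OF assms] unfolding mv_def mvb_def .

lemma coord_e':
  assumes "1 \<le> k" "Suc k < n"
  shows "crd (act n sc z w (e_mono n q sc z w k) x) t =
    (if snd t (Suc k) \<noteq> 0 then crd x (fst t, mv k (snd t))
        * of_real (- (inverse q * q powi (int (snd t (Suc k) - 1) + int (fst t k) - int (fst t (Suc k))) * qbr q (snd t k + 1))) else 0) +
    (if fst t k \<noteq> 0 then crd x (mvb k (fst t), snd t)
        * of_real (q ^ (fst t k - 1) * qbr q (fst t (Suc k) + 1)) else 0)"
  using coord_e[OF assms] unfolding mv_def mvb_def .

lemma Uinv_iff: "Uinv n q sc z w 1 x \<longleftrightarrow>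
   (\<forall>i\<in>{1..<n}. act n sc z w (qe_mono n q sc z w i) x = x) \<and>
   (\<forall>k. 1 \<le> k \<and> Suc k < n \<longrightarrow> act n sc z w (e_mono n q sc z w k) x = 0 \<and> act n sc z w (f_mono n q sc z w k) x = 0)"
proof -
  have a: "{1..n - 1} = {1..<n}" using n2 by auto
  have b: "k \<in> {1..n - 1 - 1} \<longleftrightarrow> 1 \<le> k \<and> Suc k < n" for k using n2 by auto
  show ?thesis unfolding Uinv_def a Ball_def b by blast
qed

lemma mi_mv_rev: assumes "1 \<le> k" "Suc k < n" "mi n (mv k r)" shows "mi n r"
  unfolding mi_def
proof (intro allI impI)
  fix i assume i: "i = 0 \<or> n < i"
  then have "i \<noteq> k" "i \<noteq> Suc k" using assms by auto
  then show "r i = 0" using assms(3) i unfolding mi_def by (metis mv_other)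
qed

lemma mi_mvb_rev: assumes "1 \<le> k" "Suc k < n" "mi n (mvb k r)" shows "mi n r"
  unfolding mi_def
proof (intro allI impI)
  fix i assume i: "i = 0 \<or> n < i"
  then have "i \<noteq> k" "i \<noteq> Suc k" using assms by auto
  then show "r i = 0" using assms(3) i unfolding mi_def by (metis mvb_other)
qed

context fixes l m :: nat
begin

definition Vf :: "(nat \<Rightarrow> complex) \<Rightarrow> (nat \<Rightarrow> nat) \<times> (nat \<Rightarrow> nat) \<Rightarrow> complex" where
  "Vf g p = (if inD l m p then g (sl (fst p)) / of_real (Wt (fst p)) else 0)"

lemma Wt_nz: "Wt r \<noteq> 0" using Wt_pos[of r] by simp
lemma Wt_nzc: "(of_real (Wt r) :: complex) \<noteq> 0" using Wt_nz by simp

lemma Vf_qe: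
  assumes "crd x = Vf g" "i \<in> {1..<n}"
  shows "act n sc z w (qe_mono n q sc z w i) x = x"
proof (rule coord_inj, rule ext)
  fix t
  show "crd (act n sc z w (qe_mono n q sc z w i) x) t = crd x t"
  proof (cases "inD l m t")
    case True
    then have "fst t i = snd t i" using assms(2) by (simp add: inD_def)
    then show ?thesis by (simp add: coord_qe)
  next
    case False
    then show ?thesis by (simp add: coord_qe assms(1) Vf_def)
  qed
qed

lemma Vf_f:
  assumes x: "crd x = Vf g" and k: "1 \<le> k" "Suc k < n"
  shows "act n sc z w (f_mono n q sc z w k) x = 0"
proof -
  have ki: "k \<in> {1..<n}" "Suc k \<in> {1..<n}" using k by auto
  have Z: "crd (act n sc z w (f_mono n q sc z w k) x) t = 0" for t
  proof -
    obtain r s where t: "t = (r, s)" by (cases t)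
    define A1 where "A1 = (s k \<noteq> 0 \<and> inD l m (r, mvb k s))"
    define A2 where "A2 = (r (Suc k) \<noteq> 0 \<and> inD l m (mv k r, s))"
    have A12: "A1 \<Longrightarrow> A2"
    proof -
      assume A1
      then have s0: "s k \<noteq> 0" and D: "inD l m (r, mvb k s)" by (auto simp: A1_def)
      have eq: "\<forall>i\<in>{1..<n}. r i = mvb k s i" using D by (simp add: inD_def)
      have r0: "r (Suc k) \<noteq> 0" using eq ki by auto
      have "\<forall>i\<in>{1..<n}. mv k r i = s i"
      proof
        fix i assume i: "i \<in> {1..<n}"
        show "mv k r i = s i"
          using eq[rule_format, OF i] eq[rule_format, OF ki(1)] eq[rule_format, OF ki(2)] s0 r0
          by (cases "i = k"; cases "i = Suc k") auto
      qed
      moreover have "deg n (mv k r) = deg n r" using deg_mv[OF k, of r, OF r0] .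
      moreover have "deg n (mvb k s) = deg n s" using deg_mvb[OF k, of s, OF s0] .
      ultimately show A2 using D r0 mi_mv[OF k] mi_mvb_rev[OF k, of s] by (simp add: A2_def inD_def)
    qed
    have A21: "A2 \<Longrightarrow> A1"
    proof -
      assume A2
      then have r0: "r (Suc k) \<noteq> 0" and D: "inD l m (mv k r, s)" by (auto simp: A2_def)
      have eq: "\<forall>i\<in>{1..<n}. mv k r i = s i" using D by (simp add: inD_def)
      have s0: "s k \<noteq> 0" using eq ki by force
      have "\<forall>i\<in>{1..<n}. r i = mvb k s i"
      proof
        fix i assume i: "i \<in> {1..<n}"
        show "r i = mvb k s i"
          using eq[rule_format, OF i] eq[rule_format, OF ki(1)] eq[rule_format, OF ki(2)] s0 r0
          by (cases "i = k"; cases "i = Suc k") auto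
      qed
      moreover have "deg n (mv k r) = deg n r" using deg_mv[OF k, of r, OF r0] .
      moreover have "deg n (mvb k s) = deg n s" using deg_mvb[OF k, of s, OF s0] .
      ultimately show A1 using D s0 mi_mvb[OF k] mi_mv_rev[OF k, of r] by (simp add: A1_def inD_def)
    qed
    show ?thesis
    proof (cases A1)
      case False
      then have nA2: "\<not> A2" using A21 by blast
      have v1: "Vf g (r, mvb k s) = 0" if "s k \<noteq> 0" using False that by (simp add: Vf_def A1_def)
      have v2: "Vf g (mv k r, s) = 0" if "r (Suc k) \<noteq> 0" using nA2 that by (simp add: Vf_def A2_def)
      show ?thesis by (simp add: coord_f'[OF k] t x v1 v2)
    next
      case True
      then have s0: "s k \<noteq> 0" and D: "inD l m (r, mvb k s)" by (auto simp: A1_def)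
      have A2: A2 using A12 True by blast
      then have r0: "r (Suc k) \<noteq> 0" and D2: "inD l m (mv k r, s)" by (auto simp: A2_def)
      have eq: "\<forall>i\<in>{1..<n}. r i = mvb k s i" using D by (simp add: inD_def)
      have e1: "s k - 1 + 1 = s k" using s0 by simp
      have e2: "s (Suc k) + 1 = r (Suc k)" using eq ki by auto
      have e3: "int (r (Suc k) - 1) + int (s k) - int (s (Suc k)) = int (s k)" using e2 by auto
      have slr: "sl (mv k r) = sl r" using sl_mv[OF k, of r, OF r0] .
      have W: "qbr q (r k + 1) / Wt (mv k r) = qbr q (r (Suc k)) / Wt r"
        using Wt_mv[OF k, of r, OF r0] Wt_nz[of r] Wt_nz[of "mv k r"] by (simp add: field_simps)
      have W': "q ^ s k * qbr q (r k + 1) / Wt (mv k r) = q ^ s k * qbr q (r (Suc k)) / Wt r"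
        using W by (metis times_divide_eq_right)
      have V1: "Vf g (r, mvb k s) = g (sl r) / of_real (Wt r)" using D by (simp add: Vf_def)
      have V2: "Vf g (mv k r, s) = g (sl r) / of_real (Wt (mv k r))" using D2 slr by (simp add: Vf_def)
      have "crd (act n sc z w (f_mono n q sc z w k) x) t =
          Vf g (r, mvb k s) * of_real (- (q ^ (s k - 1 + 1) * qbr q (s (Suc k) + 1))) +
          Vf g (mv k r, s) * of_real (q powi (int (r (Suc k) - 1) + int (s k) - int (s (Suc k))) * qbr q (r k + 1))"
        unfolding coord_f'[OF k] t fst_conv snd_conv x if_P[OF s0] if_P[OF r0] ..
      also have "\<dots> = g (sl r) / of_real (Wt r) * of_real (- (q ^ s k * qbr q (r (Suc k)))) +
          g (sl r) / of_real (Wt (mv k r)) * of_real (q ^ s k * qbr q (r k + 1))"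
        unfolding V1 V2 e1 e2 e3 power_int_of_nat ..
      also have "\<dots> = - (g (sl r) * of_real (q ^ s k * qbr q (r (Suc k)) / Wt r)) +
          g (sl r) * of_real (q ^ s k * qbr q (r k + 1) / Wt (mv k r))"
        by (simp add: field_simps)
      also have "\<dots> = 0" unfolding W' by simp
      finally show ?thesis .
    qed
  qed
  have E: "crd (act n sc z w (f_mono n q sc z w k) x) = (\<lambda>p. 0)"
  proof
    fix t show "crd (act n sc z w (f_mono n q sc z w k) x) t = 0" by (rule Z)
  qed
  show ?thesis using E coord_eq_0_iff by blast
qed


lemma Vf_e:
  assumes x: "crd x = Vf g" and k: "1 \<le> k" "Suc k < n"
  shows "act n sc z w (e_mono n q sc z w k) x = 0"
proof -
  have ki: "k \<in> {1..<n}" "Suc k \<in> {1..<n}" using k by auto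
  have Z: "crd (act n sc z w (e_mono n q sc z w k) x) t = 0" for t
  proof -
    obtain r s where t: "t = (r, s)" by (cases t)
    define A1 where "A1 = (s (Suc k) \<noteq> 0 \<and> inD l m (r, mv k s))"
    define A2 where "A2 = (r k \<noteq> 0 \<and> inD l m (mvb k r, s))"
    have A12: "A1 \<Longrightarrow> A2"
    proof -
      assume A1
      then have s0: "s (Suc k) \<noteq> 0" and D: "inD l m (r, mv k s)" by (auto simp: A1_def)
      have eq: "\<forall>i\<in>{1..<n}. r i = mv k s i" using D by (simp add: inD_def)
      have r0: "r k \<noteq> 0" using eq ki by auto
      have "\<forall>i\<in>{1..<n}. mvb k r i = s i"
      proof
        fix i assume i: "i \<in> {1..<n}"
        show "mvb k r i = s i"
          using eq[rule_format, OF i] eq[rule_format, OF ki(1)] eq[rule_format, OF ki(2)] s0 r0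
          by (cases "i = k"; cases "i = Suc k") auto
      qed
      moreover have "deg n (mvb k r) = deg n r" using deg_mvb[OF k, of r, OF r0] .
      moreover have "deg n (mv k s) = deg n s" using deg_mv[OF k, of s, OF s0] .
      ultimately show A2 using D r0 mi_mvb[OF k] mi_mv_rev[OF k, of s] by (simp add: A2_def inD_def)
    qed
    have A21: "A2 \<Longrightarrow> A1"
    proof -
      assume A2
      then have r0: "r k \<noteq> 0" and D: "inD l m (mvb k r, s)" by (auto simp: A2_def)
      have eq: "\<forall>i\<in>{1..<n}. mvb k r i = s i" using D by (simp add: inD_def)
      have s0: "s (Suc k) \<noteq> 0" using eq ki by force
      have "\<forall>i\<in>{1..<n}. r i = mv k s i"
      proof
        fix i assume i: "i \<in> {1..<n}"
        show "r i = mv k s i"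
          using eq[rule_format, OF i] eq[rule_format, OF ki(1)] eq[rule_format, OF ki(2)] s0 r0
          by (cases "i = k"; cases "i = Suc k") auto
      qed
      moreover have "deg n (mvb k r) = deg n r" using deg_mvb[OF k, of r, OF r0] .
      moreover have "deg n (mv k s) = deg n s" using deg_mv[OF k, of s, OF s0] .
      ultimately show A1 using D s0 mi_mv[OF k] mi_mvb_rev[OF k, of r] by (simp add: A1_def inD_def)
    qed
    show ?thesis
    proof (cases A1)
      case False
      then have nA2: "\<not> A2" using A21 by blast
      have v1: "Vf g (r, mv k s) = 0" if "s (Suc k) \<noteq> 0" using False that by (simp add: Vf_def A1_def)
      have v2: "Vf g (mvb k r, s) = 0" if "r k \<noteq> 0" using nA2 that by (simp add: Vf_def A2_def)
      show ?thesis by (simp add: coord_e'[OF k] t x v1 v2)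
    next
      case True
      then have s0: "s (Suc k) \<noteq> 0" and D: "inD l m (r, mv k s)" by (auto simp: A1_def)
      have A2: A2 using A12 True by blast
      then have r0: "r k \<noteq> 0" and D2: "inD l m (mvb k r, s)" by (auto simp: A2_def)
      have eq: "\<forall>i\<in>{1..<n}. r i = mv k s i" using D by (simp add: inD_def)
      have e1: "s k + 1 = r k" using eq ki by auto
      have e2: "int (s (Suc k) - 1) + int (r k) - int (r (Suc k)) = int (r k)" using eq ki by auto
      have e3: "inverse q * q ^ r k = q ^ (r k - 1)"
      proof -
        obtain j where "r k = Suc j" using r0 by (cases "r k") auto
        then show ?thesis using q0 by simp
      qed
      have slr: "sl (mvb k r) = sl r" using sl_mvb[OF k, of r, OF r0] .
      have W: "qbr q (r (Suc k) + 1) / Wt (mvb k r) = qbr q (r k) / Wt r"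
        using Wt_mvb[OF k, of r, OF r0] Wt_nz[of r] Wt_nz[of "mvb k r"] by (simp add: field_simps)
      have W': "q ^ (r k - 1) * qbr q (r (Suc k) + 1) / Wt (mvb k r) = q ^ (r k - 1) * qbr q (r k) / Wt r"
        using W by (metis times_divide_eq_right)
      have V1: "Vf g (r, mv k s) = g (sl r) / of_real (Wt r)" using D by (simp add: Vf_def)
      have V2: "Vf g (mvb k r, s) = g (sl r) / of_real (Wt (mvb k r))" using D2 slr by (simp add: Vf_def)
      have "crd (act n sc z w (e_mono n q sc z w k) x) t =
          Vf g (r, mv k s) * of_real (- (inverse q * q powi (int (s (Suc k) - 1) + int (r k) - int (r (Suc k))) * qbr q (s k + 1))) +
          Vf g (mvb k r, s) * of_real (q ^ (r k - 1) * qbr q (r (Suc k) + 1))"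
        unfolding coord_e'[OF k] t fst_conv snd_conv x if_P[OF s0] if_P[OF r0] ..
      also have "\<dots> = g (sl r) / of_real (Wt r) * of_real (- (inverse q * q ^ r k * qbr q (r k))) +
          g (sl r) / of_real (Wt (mvb k r)) * of_real (q ^ (r k - 1) * qbr q (r (Suc k) + 1))"
        unfolding V1 V2 e1 e2 power_int_of_nat ..
      also have "\<dots> = - (g (sl r) * of_real (q ^ (r k - 1) * qbr q (r k) / Wt r)) +
          g (sl r) * of_real (q ^ (r k - 1) * qbr q (r (Suc k) + 1) / Wt (mvb k r))"
        unfolding e3 by (simp add: field_simps)
      also have "\<dots> = 0" unfolding W' by simp
      finally show ?thesis .
    qed
  qed
  have E: "crd (act n sc z w (e_mono n q sc z w k) x) = (\<lambda>p. 0)"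
  proof
    fix t show "crd (act n sc z w (e_mono n q sc z w k) x) t = 0" by (rule Z)
  qed
  show ?thesis using E coord_eq_0_iff by blast
qed

end
end

context ZN begin
context fixes l m :: nat
begin

lemma Vf_suff:
  assumes x: "crd x = Vf l m g"
  shows "x \<in> Zlm n sc z w l m \<and> Uinv n q sc z w 1 x"
proof
  show "x \<in> Zlm n sc z w l m"
    unfolding Zlm_def
  proof (intro CollectI allI impI)
    fix p assume "crd x p \<noteq> 0"
    then have "inD l m p" using x by (auto simp: Vf_def split: if_splits)
    then show "deg n (fst p) = l \<and> deg n (snd p) = m" by (simp add: inD_def)
  qed
  show "Uinv n q sc z w 1 x"
    unfolding Uinv_iff using Vf_qe[OF x] Vf_e[OF x] Vf_f[OF x] by blast
qed

definition bfun :: "nat \<Rightarrow> nat \<Rightarrow> nat \<Rightarrow> nat" where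
  "bfun L s = (\<lambda>i. if i = 1 then s else if i = n then L - s else 0)"

lemma sl_single: assumes "\<forall>i\<in>{1..<n}. i \<noteq> 1 \<longrightarrow> r i = 0" shows "sl r = r 1"
proof -
  have "sl r = r 1 + sum r ({1..<n} - {1})"
    unfolding sl_def using n2 by (subst sum.remove[of _ 1]) auto
  moreover have "sum r ({1..<n} - {1}) = 0" using assms by (intro sum.neutral) auto
  ultimately show ?thesis by simp
qed

lemma base_eq:
  assumes D: "inD l m p" and P: "Phi (fst p) = 0"
  shows "p = (bfun l (sl (fst p)), bfun m (sl (fst p)))"
proof -
  obtain r s where p: "p = (r, s)" by (cases p)
  have mr: "mi n r" and ms: "mi n s" and eq: "\<forall>i\<in>{1..<n}. r i = s i" and dr: "deg n r = l" and ds: "deg n s = m"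
    using D by (auto simp: inD_def p)
  have "\<forall>i\<in>{1..<n}. (i - 1) * r i = 0" using P by (simp add: Phi_def p)
  then have z: "\<forall>i\<in>{1..<n}. i \<noteq> 1 \<longrightarrow> r i = 0" by auto
  then have zs: "\<forall>i\<in>{1..<n}. i \<noteq> 1 \<longrightarrow> s i = 0" using eq by auto
  have slr: "sl r = r 1" using sl_single[OF z] .
  have sls: "sl s = sl r" unfolding sl_def using eq by (intro sum.cong) auto
  have r1: "r 1 = s 1" using eq n2 by auto
  have "r = bfun l (sl r)"
  proof
    fix i
    show "r i = bfun l (sl r) i"
    proof (cases "i = 1")
      case True then show ?thesis by (simp add: bfun_def slr)
    next
      case False
      show ?thesis
      proof (cases "i = n")
        case True then show ?thesis using False dr deg_split[of r] by (simp add: bfun_def)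
      next
        case False2: False
        show ?thesis
        proof (cases "i \<in> {1..<n}")
          case True then show ?thesis using z False False2 by (simp add: bfun_def)
        next
          case False3: False
          then have "i = 0 \<or> n < i" using False2 by auto
          then show ?thesis using mr False False2 by (auto simp: bfun_def mi_def)
        qed
      qed
    qed
  qed
  moreover have "s = bfun m (sl r)"
  proof
    fix i
    show "s i = bfun m (sl r) i"
    proof (cases "i = 1")
      case True then show ?thesis using r1 by (simp add: bfun_def slr)
    next
      case False
      show ?thesis
      proof (cases "i = n")
        case True then show ?thesis using False ds deg_split[of s] sls by (simp add: bfun_def)
      next
        case False2: False
        show ?thesis
        proof (cases "i \<in> {1..<n}")
          case True then show ?thesis using zs False False2 by (simp add: bfun_def)
        next
          case False3: False
          then have "i = 0 \<or> n < i" using False2 by auto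
          then show ?thesis using ms False False2 by (auto simp: bfun_def mi_def)
        qed
      qed
    qed
  qed
  ultimately show ?thesis by (simp add: p)
qed

context
  fixes x assumes xZ: "x \<in> Zlm n sc z w l m" and U: "Uinv n q sc z w 1 x"
begin

lemma nec_qe: "\<forall>i\<in>{1..<n}. act n sc z w (qe_mono n q sc z w i) x = x"
  using U unfolding Uinv_iff by blast
lemma nec_f: "1 \<le> k \<Longrightarrow> Suc k < n \<Longrightarrow> act n sc z w (f_mono n q sc z w k) x = 0"
  using U unfolding Uinv_iff by blast

lemma S1: assumes nz: "crd x p \<noteq> 0" shows "inD l m p"
proof -
  have mi: "mi n (fst p) \<and> mi n (snd p)" using coord_mi[OF nz] .
  have dg: "deg n (fst p) = l \<and> deg n (snd p) = m" using xZ nz unfolding Zlm_def by blast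
  have "\<forall>i\<in>{1..<n}. fst p i = snd p i"
  proof
    fix i assume i: "i \<in> {1..<n}"
    have "crd (act n sc z w (qe_mono n q sc z w i) x) p = crd x p" using nec_qe i by simp
    then have "crd x p * of_real (q powi (int (fst p i) - int (snd p i))) = crd x p * 1"
      by (simp add: coord_qe)
    then have "(of_real (q powi (int (fst p i) - int (snd p i))) :: complex) = 1"
      using nz mult_left_cancel by blast
    then have "q powi (int (fst p i) - int (snd p i)) = 1" by (simp only: of_real_eq_1_iff)
    then have "int (fst p i) - int (snd p i) = 0" by (rule powi_eq_1[OF q0 q1])
    then show "fst p i = snd p i" by simp
  qed
  then show ?thesis using mi dg by (simp add: inD_def)
qed

lemma S2:
  assumes D: "inD l m (r, s)" and k: "1 \<le> k" "Suc k < n" and s0: "s (Suc k) \<noteq> 0"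
  shows "crd x (r, s) * of_real (qbr q (s (Suc k))) = crd x (mv k r, mv k s) * of_real (qbr q (s k + 1))"
proof -
  have eq: "\<forall>i\<in>{1..<n}. r i = s i" using D by (simp add: inD_def)
  have rk: "r k = s k" and rSk: "r (Suc k) = s (Suc k)" using eq k by auto
  have r0: "r (Suc k) \<noteq> 0" using rSk s0 by simp
  have c0: "(mv k s) k \<noteq> 0" by simp
  have mm: "mvb k (mv k s) = s" using mvb_mv[of s k, OF s0] .
  have e1: "mv k s k - 1 + 1 = s k + 1" by simp
  have e2: "mv k s (Suc k) + 1 = s (Suc k)" using s0 by simp
  have e3: "int (r (Suc k) - 1) + int (mv k s k) - int (mv k s (Suc k)) = int (s k + 1)"
    using rSk s0 by simp
  have "0 = crd (act n sc z w (f_mono n q sc z w k) x) (r, mv k s)"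
    using nec_f[OF k] coord_zero by simp
  also have "\<dots> = crd x (r, s) * of_real (- (q ^ (s k + 1) * qbr q (s (Suc k)))) +
       crd x (mv k r, mv k s) * of_real (q ^ (s k + 1) * qbr q (s k + 1))"
    unfolding coord_f'[OF k] fst_conv snd_conv if_P[OF c0] if_P[OF r0] mm e1 e2 e3 power_int_of_nat rk ..
  finally have "crd x (r, s) * of_real (qbr q (s (Suc k))) * of_real (q ^ (s k + 1)) =
      crd x (mv k r, mv k s) * of_real (qbr q (s k + 1)) * of_real (q ^ (s k + 1))"
    by (simp add: algebra_simps)
  moreover have "(of_real (q ^ (s k + 1)) :: complex) \<noteq> 0" using q0 by simp
  ultimately show ?thesis by simp
qed

definition G where "G p = crd x p * of_real (Wt (fst p))"

lemma S3: "inD l m p \<Longrightarrow> G p = G (bfun l (sl (fst p)), bfun m (sl (fst p)))"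
proof (induction "Phi (fst p)" arbitrary: p rule: less_induct)
  case less
  obtain r s where p: "p = (r, s)" by (cases p)
  have D: "inD l m (r, s)" using less.prems p by simp
  have eq: "\<forall>i\<in>{1..<n}. r i = s i" and mr: "mi n r" and ms: "mi n s"
    and dr: "deg n r = l" and ds: "deg n s = m" using D by (auto simp: inD_def)
  show ?case
  proof (cases "Phi r = 0")
    case True
    have "p = (bfun l (sl (fst p)), bfun m (sl (fst p)))"
      using base_eq[OF less.prems] True p by simp
    then show ?thesis by (rule arg_cong[where f = G])
  next
    case False
    have "\<exists>i\<in>{1..<n}. i \<noteq> 1 \<and> r i \<noteq> 0"
    proof (rule ccontr)
      assume "\<not> ?thesis"
      then have "\<forall>i\<in>{1..<n}. (i - 1) * r i = 0" by auto
      then have "Phi r = 0" unfolding Phi_def by (intro sum.neutral) auto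
      with False show False by simp
    qed
    then obtain i where i: "i \<in> {1..<n}" "i \<noteq> 1" "r i \<noteq> 0" by blast
    define k where "k = i - 1"
    have k: "1 \<le> k" "Suc k < n" and ik: "i = Suc k" using i by (auto simp: k_def)
    have r0: "r (Suc k) \<noteq> 0" using i ik by simp
    have s0: "s (Suc k) \<noteq> 0" using r0 eq k by auto
    have rk: "r k = s k" and rSk: "r (Suc k) = s (Suc k)" using eq k by auto
    define p' where "p' = (mv k r, mv k s)"
    have D': "inD l m p'"
    proof -
      have "\<forall>j\<in>{1..<n}. mv k r j = mv k s j" using eq rk rSk by (simp add: mv_def)
      moreover have "deg n (mv k r) = l" using deg_mv[OF k, of r, OF r0] dr by simp
      moreover have "deg n (mv k s) = m" using deg_mv[OF k, of s, OF s0] ds by simp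
      ultimately show ?thesis using mi_mv[OF k] mr ms by (simp add: inD_def p'_def)
    qed
    have Ph: "Phi (fst p') < Phi (fst p)" using Phi_mv[OF k, of r, OF r0] by (simp add: p'_def p)
    have IH: "G p' = G (bfun l (sl (fst p')), bfun m (sl (fst p')))" using less.hyps[OF Ph D'] .
    have slp: "sl (fst p') = sl (fst p)" using sl_mv[OF k, of r, OF r0] by (simp add: p'_def p)
    have rec: "crd x (r, s) * of_real (qbr q (s (Suc k))) = crd x (mv k r, mv k s) * of_real (qbr q (s k + 1))"
      using S2[OF D k s0] .
    have Wm: "(of_real (Wt (mv k r)) :: complex) * of_real (qbr q (s (Suc k))) = of_real (Wt r) * of_real (qbr q (s k + 1))"
      using Wt_mv[OF k, of r, OF r0] rk rSk by (metis of_real_mult)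
    have B0: "(of_real (qbr q (s (Suc k))) :: complex) \<noteq> 0" using qbr_nz[OF s0] by simp
    have "G p * of_real (qbr q (s (Suc k))) = G p' * of_real (qbr q (s (Suc k)))"
    proof -
      have "G p * of_real (qbr q (s (Suc k))) = (crd x (r, s) * of_real (qbr q (s (Suc k)))) * of_real (Wt r)"
        by (simp add: G_def p ac_simps)
      also have "\<dots> = crd x (mv k r, mv k s) * (of_real (Wt r) * of_real (qbr q (s k + 1)))"
        unfolding rec by (simp add: ac_simps)
      also have "\<dots> = crd x (mv k r, mv k s) * (of_real (Wt (mv k r)) * of_real (qbr q (s (Suc k))))"
        unfolding Wm ..
      also have "\<dots> = G p' * of_real (qbr q (s (Suc k)))"
        by (simp add: G_def p'_def ac_simps)
      finally show ?thesis .
    qed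
    then have "G p = G p'" using B0 by simp
    then show ?thesis using IH slp by simp
  qed
qed

lemma nec: "\<exists>g. crd x = Vf l m g"
proof
  define g where "g s = G (bfun l s, bfun m s)" for s
  show "crd x = Vf l m g"
  proof
    fix p
    show "crd x p = Vf l m g p"
    proof (cases "inD l m p")
      case True
      have "crd x p = G p / of_real (Wt (fst p))" using Wt_nzc by (simp add: G_def)
      also have "\<dots> = g (sl (fst p)) / of_real (Wt (fst p))" using S3[OF True] by (simp add: g_def)
      finally show ?thesis using True by (simp add: Vf_def)
    next
      case False
      then have "crd x p = 0" using S1 by blast
      then show ?thesis using False by (simp add: Vf_def)
    qed
  qed
qed

end
end
end

lemma upt_split: assumes "1 \<le> k" "k \<le> n" shows "[1..<Suc n] = [1..<k] @ k # [Suc k..<Suc n]"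
proof -
  have "[1..<Suc n] = [1..<k] @ [k..<Suc n]" using upt_add_eq_append[of 1 k "Suc n - k"] assms by simp
  moreover have "[k..<Suc n] = k # [Suc k..<Suc n]" using assms by (simp add: upt_conv_Cons)
  ultimately show ?thesis by simp
qed

context ZN begin

abbreviation "iq \<equiv> of_real (inverse q) :: complex"

lemma sc_iq_q: "sc iq * sc (of_real q) = 1"
proof -
  have "sc iq * sc (of_real q) = sc (iq * of_real q)" by (simp add: sc_mult)
  also have "iq * of_real q = 1" using q0 by (simp flip: of_real_mult)
  finally show ?thesis by simp
qed

lemma sc_lc: "x * (sc a * y) = sc a * (x * y)"
  by (metis mult.assoc sc_comm)

lemma zz_swap: assumes "i \<in> {1..n}" "k \<in> {1..n}" "i < k" shows "z k * z i = sc iq * (z i * z k)"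
proof -
  have "sc iq * (z i * z k) = sc iq * (sc (of_real q) * z k * z i)" using rel_zz[OF assms] by simp
  also have "\<dots> = (sc iq * sc (of_real q)) * (z k * z i)" by (simp add: mult.assoc)
  finally show ?thesis using sc_iq_q by simp
qed

lemma ww_swap: assumes "i \<in> {1..n}" "k \<in> {1..n}" "i < k" shows "w i * w k = sc iq * (w k * w i)"
proof -
  have "sc iq * (w k * w i) = sc iq * (sc (of_real q) * w i * w k)" using rel_ww[OF assms] by simp
  also have "\<dots> = (sc iq * sc (of_real q)) * (w i * w k)" by (simp add: mult.assoc)
  finally show ?thesis using sc_iq_q by simp
qed

lemma zz_pow: assumes "i \<in> {1..n}" "k \<in> {1..n}" "i < k"
  shows "z k * z i ^ a = sc (iq ^ a) * (z i ^ a * z k)"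
proof (induction a)
  case 0 then show ?case by simp
next
  case (Suc a)
  have "z k * z i ^ Suc a = (z k * z i) * z i ^ a" by (simp add: mult.assoc)
  also have "\<dots> = sc iq * (z i * (z k * z i ^ a))" by (simp add: zz_swap[OF assms] mult.assoc)
  also have "\<dots> = sc iq * (z i * (sc (iq ^ a) * (z i ^ a * z k)))" by (simp add: Suc)
  also have "\<dots> = sc iq * (sc (iq ^ a) * (z i * (z i ^ a * z k)))" by (simp only: sc_lc[of "z i"])
  also have "\<dots> = sc (iq ^ Suc a) * (z i ^ Suc a * z k)" by (simp add: sc_mult mult.assoc)
  finally show ?case .
qed

lemma ww_pow: assumes "i \<in> {1..n}" "k \<in> {1..n}" "i < k"
  shows "w i ^ a * w k = sc (iq ^ a) * (w k * w i ^ a)"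
proof (induction a)
  case 0 then show ?case by simp
next
  case (Suc a)
  have "w i ^ Suc a * w k = w i ^ a * (w i * w k)" by (simp only: power_Suc2 mult.assoc)
  also have "\<dots> = sc iq * ((w i ^ a * w k) * w i)" by (simp only: ww_swap[OF assms] sc_lc[of "w i ^ a"] mult.assoc)
  also have "\<dots> = sc iq * (sc (iq ^ a) * (w k * w i ^ a) * w i)" by (simp add: Suc)
  also have "\<dots> = sc (iq ^ Suc a) * (w k * w i ^ Suc a)" by (simp add: sc_mult mult.assoc power_commutes)
  finally show ?case .
qed

lemma z_list: assumes "\<forall>i\<in>set xs. i \<in> {1..<k}" "k \<in> {1..n}"
  shows "z k * prod_list (map (\<lambda>i. z i ^ la i) xs) = sc (iq ^ sum_list (map la xs)) * (prod_list (map (\<lambda>i. z i ^ la i) xs) * z k)"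
  using assms(1)
proof (induction xs)
  case Nil then show ?case by simp
next
  case (Cons x xs)
  have x: "x \<in> {1..n}" "x < k" using Cons.prems assms(2) by auto
  have "z k * prod_list (map (\<lambda>i. z i ^ la i) (x # xs)) = (z k * z x ^ la x) * prod_list (map (\<lambda>i. z i ^ la i) xs)"
    by (simp add: mult.assoc)
  also have "\<dots> = sc (iq ^ la x) * (z x ^ la x * (z k * prod_list (map (\<lambda>i. z i ^ la i) xs)))"
    by (simp add: zz_pow[OF x(1) assms(2) x(2)] mult.assoc)
  also have "\<dots> = sc (iq ^ la x) * (z x ^ la x * (sc (iq ^ sum_list (map la xs)) * (prod_list (map (\<lambda>i. z i ^ la i) xs) * z k)))"
    using Cons by simp
  also have "\<dots> = sc (iq ^ la x) * sc (iq ^ sum_list (map la xs)) * (z x ^ la x * (prod_list (map (\<lambda>i. z i ^ la i) xs) * z k))"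
    by (simp only: sc_lc[of "z x ^ la x"] mult.assoc)
  also have "\<dots> = sc (iq ^ sum_list (map la (x # xs))) * (prod_list (map (\<lambda>i. z i ^ la i) (x # xs)) * z k)"
    by (simp add: sc_mult power_add mult.assoc)
  finally show ?case .
qed

lemma w_list: assumes "\<forall>i\<in>set xs. i \<in> {1..<k}" "k \<in> {1..n}"
  shows "prod_list (map (\<lambda>i. w i ^ mu i) xs) * w k = sc (iq ^ sum_list (map mu xs)) * (w k * prod_list (map (\<lambda>i. w i ^ mu i) xs))"
  using assms(1)
proof (induction xs)
  case Nil then show ?case by simp
next
  case (Cons x xs)
  have x: "x \<in> {1..n}" "x < k" using Cons.prems assms(2) by auto
  have "prod_list (map (\<lambda>i. w i ^ mu i) (x # xs)) * w k = w x ^ mu x * (prod_list (map (\<lambda>i. w i ^ mu i) xs) * w k)"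
    by (simp add: mult.assoc)
  also have "\<dots> = w x ^ mu x * (sc (iq ^ sum_list (map mu xs)) * (w k * prod_list (map (\<lambda>i. w i ^ mu i) xs)))"
    using Cons by simp
  also have "\<dots> = sc (iq ^ sum_list (map mu xs)) * ((w x ^ mu x * w k) * prod_list (map (\<lambda>i. w i ^ mu i) xs))"
    by (simp only: sc_lc[of "w x ^ mu x"] mult.assoc)
  also have "\<dots> = sc (iq ^ sum_list (map mu xs)) * (sc (iq ^ mu x) * (w k * w x ^ mu x) * prod_list (map (\<lambda>i. w i ^ mu i) xs))"
    by (simp add: ww_pow[OF x(1) assms(2) x(2)])
  also have "\<dots> = sc (iq ^ sum_list (map mu (x # xs))) * (w k * prod_list (map (\<lambda>i. w i ^ mu i) (x # xs)))"
    by (simp add: sc_left power_add mult.assoc mult.commute)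
  finally show ?case .
qed

lemma sum_list_upt: "sum_list (map f [1..<k]) = (\<Sum>i\<in>{1..<k}. f i)"
  by (simp add: sum_set_upt_conv_sum_list_nat[symmetric])

lemma z_mono: assumes k: "k \<in> {1..n}"
  shows "z k * Defs.mono z w n la mu = sc (iq ^ (\<Sum>i\<in>{1..<k}. la i)) * Defs.mono z w n (la(k := la k + 1)) mu"
proof -
  have sp: "[1..<Suc n] = [1..<k] @ k # [Suc k..<Suc n]" using k by (intro upt_split) auto
  let ?Z = "\<lambda>la xs. prod_list (map (\<lambda>i. z i ^ la i) xs)"
  have a: "?Z (la(k := la k + 1)) [1..<k] = ?Z la [1..<k]" by (intro arg_cong[where f = prod_list] map_cong) auto
  have b: "?Z (la(k := la k + 1)) [Suc k..<Suc n] = ?Z la [Suc k..<Suc n]" by (intro arg_cong[where f = prod_list] map_cong) auto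
  have zl: "z k * ?Z la [1..<k] = sc (iq ^ (\<Sum>i\<in>{1..<k}. la i)) * (?Z la [1..<k] * z k)"
    using z_list[of "[1..<k]" k la] k by (simp only: sum_list_upt) simp
  have "z k * ?Z la [1..<Suc n] = (z k * ?Z la [1..<k]) * (z k ^ la k * ?Z la [Suc k..<Suc n])"
    unfolding sp by (simp add: mult.assoc)
  also have "\<dots> = sc (iq ^ (\<Sum>i\<in>{1..<k}. la i)) * (?Z la [1..<k] * (z k * z k ^ la k) * ?Z la [Suc k..<Suc n])"
    unfolding zl by (simp only: mult.assoc)
  also have "\<dots> = sc (iq ^ (\<Sum>i\<in>{1..<k}. la i)) * ?Z (la(k := la k + 1)) [1..<Suc n]"
    unfolding sp using a b by (simp add: mult.assoc)
  finally have F: "z k * ?Z la [1..<Suc n] = sc (iq ^ (\<Sum>i\<in>{1..<k}. la i)) * ?Z (la(k := la k + 1)) [1..<Suc n]" .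
  show ?thesis unfolding mono_def by (simp only: F mult.assoc[symmetric])
qed

lemma w_mono: assumes k: "k \<in> {1..n}"
  shows "Defs.mono z w n la mu * w k = sc (iq ^ (\<Sum>i\<in>{1..<k}. mu i)) * Defs.mono z w n la (mu(k := mu k + 1))"
proof -
  have sp: "rev [1..<Suc n] = rev [Suc k..<Suc n] @ k # rev [1..<k]" using k upt_split[of k n] by simp
  let ?W = "\<lambda>mu xs. prod_list (map (\<lambda>i. w i ^ mu i) xs)"
  have a: "?W (mu(k := mu k + 1)) (rev [1..<k]) = ?W mu (rev [1..<k])" by (intro arg_cong[where f = prod_list] map_cong) auto
  have b: "?W (mu(k := mu k + 1)) (rev [Suc k..<Suc n]) = ?W mu (rev [Suc k..<Suc n])" by (intro arg_cong[where f = prod_list] map_cong) auto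
  have sl: "sum_list (map mu (rev [1..<k])) = (\<Sum>i\<in>{1..<k}. mu i)"
    by (simp only: rev_map[symmetric] sum_list_rev sum_list_upt)
  have wl: "?W mu (rev [1..<k]) * w k = sc (iq ^ (\<Sum>i\<in>{1..<k}. mu i)) * (w k * ?W mu (rev [1..<k]))"
    using w_list[of "rev [1..<k]" k mu] k unfolding sl by simp
  have "?W mu (rev [1..<Suc n]) * w k = ?W mu (rev [Suc k..<Suc n]) * w k ^ mu k * (?W mu (rev [1..<k]) * w k)"
    unfolding sp by (simp add: mult.assoc)
  also have "\<dots> = ?W mu (rev [Suc k..<Suc n]) * (w k ^ mu k * (sc (iq ^ (\<Sum>i\<in>{1..<k}. mu i)) * (w k * ?W mu (rev [1..<k]))))"
    unfolding wl by (simp only: mult.assoc)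
  also have "\<dots> = sc (iq ^ (\<Sum>i\<in>{1..<k}. mu i)) * (?W mu (rev [Suc k..<Suc n]) * (w k ^ mu k * w k) * ?W mu (rev [1..<k]))"
    by (simp only: sc_lc mult.assoc)
  also have "\<dots> = sc (iq ^ (\<Sum>i\<in>{1..<k}. mu i)) * ?W (mu(k := mu k + 1)) (rev [1..<Suc n])"
    unfolding sp using a b by (simp add: mult.assoc power_commutes)
  finally have "?W mu (rev [1..<Suc n]) * w k = sc (iq ^ (\<Sum>i\<in>{1..<k}. mu i)) * ?W (mu(k := mu k + 1)) (rev [1..<Suc n])" .
  then show ?thesis unfolding mono_def by (simp only: mult.assoc sc_lc)
qed

end

lemma sum_split3:
  fixes f :: "nat \<Rightarrow> 'c::comm_monoid_add"
  assumes "k \<in> {1..n}"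
  shows "sum f {1..n} = sum f {1..<k} + f k + sum f {k<..n}"
proof -
  have eq: "{1..n} = {1..<k} \<union> ({k} \<union> {k<..n})" using assms by auto
  have "sum f {1..n} = sum f {1..<k} + sum f ({k} \<union> {k<..n})"
    unfolding eq by (rule sum.union_disjoint) auto
  moreover have "sum f ({k} \<union> {k<..n}) = sum f {k} + sum f {k<..n}"
    by (rule sum.union_disjoint) auto
  ultimately show ?thesis by (simp add: add.assoc)
qed

lemma sum_upd1:
  fixes f :: "'b \<Rightarrow> 'c::comm_monoid_add"
  assumes "finite A" "a \<in> A"
  shows "sum (f(a := u)) A + f a = sum f A + u"
proof -
  have r1: "sum g A = g a + sum g (A - {a})" for g :: "'b \<Rightarrow> 'c"
    using assms by (simp add: sum.remove)
  have "sum (f(a := u)) (A - {a}) = sum f (A - {a})" by (rule sum.cong) auto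
  then show ?thesis using r1[of f] r1[of "f(a := u)"] by (simp add: ac_simps)
qed

lemma prod_upd1:
  fixes f :: "'b \<Rightarrow> 'c::comm_monoid_mult"
  assumes "finite A" "a \<in> A"
  shows "prod (f(a := u)) A * f a = prod f A * u"
proof -
  have r1: "prod g A = g a * prod g (A - {a})" for g :: "'b \<Rightarrow> 'c"
    using assms by (simp add: prod.remove)
  have "prod (f(a := u)) (A - {a}) = prod f (A - {a})" by (rule prod.cong) auto
  then show ?thesis using r1[of f] r1[of "f(a := u)"] by (simp add: ac_simps)
qed

context ZN begin

abbreviation "QQ \<equiv> Q z w n"

lemma Q_z: assumes k: "k \<in> {1..n}" shows "QQ * z k = z k * QQ"
proof -
  define T where "T i = z k * (z i * w i)" for i
  define c where "c = sc (of_real (1 - q\<^sup>2))"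
  have A: "z i * w i * z k = sc (of_real (q ^ 2)) * T i" if i: "i \<in> {1..<k}" for i
  proof -
    have i': "i \<in> {1..n}" "i \<noteq> k" "i < k" using i k by auto
    have "z i * w i * z k = z i * (sc (of_real q) * z k * w i)" by (simp add: mult.assoc rel_wz[OF i'(1) k i'(2)])
    also have "\<dots> = sc (of_real q) * ((z i * z k) * w i)" by (simp only: mult.assoc sc_lc[of "z i"])
    also have "\<dots> = sc (of_real q) * (sc (of_real q) * (z k * (z i * w i)))"
      by (simp only: rel_zz[OF i'(1) k i'(3)] mult.assoc)
    also have "\<dots> = sc (of_real (q ^ 2)) * T i" by (simp add: sc_left T_def power2_eq_square)
    finally show ?thesis .
  qed
  have B: "z i * w i * z k = T i" if i: "i \<in> {k<..n}" for i
  proof -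
    have i': "i \<in> {1..n}" "i \<noteq> k" "k < i" using i k by auto
    have "z i * w i * z k = z i * (sc (of_real q) * z k * w i)" by (simp add: mult.assoc rel_wz[OF i'(1) k i'(2)])
    also have "\<dots> = (sc (of_real q) * z i * z k) * w i" by (simp only: mult.assoc sc_lc[of "z i"])
    also have "\<dots> = T i"
    proof -
      have e: "sc (of_real q) * z i * z k = z k * z i" using rel_zz[OF k i'(1) i'(3)] by simp
      show ?thesis unfolding e by (simp only: T_def mult.assoc)
    qed
    finally show ?thesis .
  qed
  have C: "z k * w k * z k = T k + c * (\<Sum>i\<in>{1..<k}. T i)"
  proof -
    have "z k * w k * z k = z k * (z k * w k + c * (\<Sum>i\<in>{1..<k}. z i * w i))"
      using rel_wzi[OF k] by (simp add: mult.assoc c_def)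
    also have "\<dots> = T k + c * (\<Sum>i\<in>{1..<k}. T i)"
      by (simp add: distrib_left sc_lc[of "z k"] c_def T_def sum_distrib_left)
    finally show ?thesis .
  qed
  have "QQ * z k = (\<Sum>i\<in>{1..n}. z i * w i * z k)" by (simp add: Q_def sum_distrib_right)
  also have "\<dots> = (\<Sum>i\<in>{1..<k}. z i * w i * z k) + z k * w k * z k + (\<Sum>i\<in>{k<..n}. z i * w i * z k)"
    by (rule sum_split3[OF k])
  also have "\<dots> = sc (of_real (q ^ 2)) * (\<Sum>i\<in>{1..<k}. T i) + (T k + c * (\<Sum>i\<in>{1..<k}. T i)) + (\<Sum>i\<in>{k<..n}. T i)"
    using A B C by (simp add: sum_distrib_left)
  also have "\<dots> = (sc (of_real (q ^ 2)) + c) * (\<Sum>i\<in>{1..<k}. T i) + T k + (\<Sum>i\<in>{k<..n}. T i)"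
    by (simp add: distrib_right add.assoc add.left_commute)
  also have "sc (of_real (q ^ 2)) + c = 1" by (simp add: c_def flip: sc_add)
  also have "1 * (\<Sum>i\<in>{1..<k}. T i) + T k + (\<Sum>i\<in>{k<..n}. T i) = (\<Sum>i\<in>{1..n}. T i)"
    using sum_split3[OF k, of T] by simp
  also have "\<dots> = z k * QQ" by (simp add: T_def Q_def sum_distrib_left)
  finally show ?thesis .
qed

lemma w_Q: "w n * QQ = QQ * w n"
proof -
  have nn: "n \<in> {1..n}" using n2 by auto
  define U where "U i = z i * w i * w n" for i
  define c where "c = sc (of_real (1 - q\<^sup>2))"
  have A: "w n * (z i * w i) = sc (of_real (q ^ 2)) * U i" if i: "i \<in> {1..<n}" for i
  proof -
    have i': "i \<in> {1..n}" "n \<noteq> i" "i < n" using i by auto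
    have "w n * (z i * w i) = sc (of_real q) * (z i * (w n * w i))"
      by (simp only: mult.assoc[symmetric] rel_wz[OF nn i'(1) i'(2)])
    also have "\<dots> = sc (of_real q) * (z i * (sc (of_real q) * w i * w n))" by (simp only: rel_ww[OF i'(1) nn i'(3)])
    also have "\<dots> = sc (of_real (q ^ 2)) * U i"
      by (simp only: mult.assoc sc_lc[of "z i"] sc_left) (simp add: U_def power2_eq_square mult.assoc)
    finally show ?thesis .
  qed
  have C: "w n * (z n * w n) = U n + c * (\<Sum>i\<in>{1..<n}. U i)"
  proof -
    have "w n * (z n * w n) = (z n * w n + c * (\<Sum>i\<in>{1..<n}. z i * w i)) * w n"
      using rel_wzi[OF nn] by (simp add: mult.assoc[symmetric] c_def)
    also have "\<dots> = U n + c * (\<Sum>i\<in>{1..<n}. U i)"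
      by (simp add: distrib_right U_def sum_distrib_right mult.assoc sum_distrib_left)
    finally show ?thesis .
  qed
  have sp: "{1..n} = insert n {1..<n}" using n2 by auto
  have "w n * QQ = (\<Sum>i\<in>{1..<n}. w n * (z i * w i)) + w n * (z n * w n)"
    unfolding Q_def sp by (simp add: sum_distrib_left distrib_left add.commute)
  also have "\<dots> = (sc (of_real (q ^ 2)) + c) * (\<Sum>i\<in>{1..<n}. U i) + U n"
    using A C by (simp add: sum_distrib_left distrib_right add.assoc sum.distrib)
  also have "sc (of_real (q ^ 2)) + c = 1" by (simp add: c_def flip: sc_add)
  also have "1 * (\<Sum>i\<in>{1..<n}. U i) + U n = QQ * w n"
    unfolding Q_def sp by (simp add: U_def sum_distrib_right distrib_right add.commute)
  finally show ?thesis .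
qed

lemma Qpow_z: "k \<in> {1..n} \<Longrightarrow> QQ ^ j * z k = z k * QQ ^ j"
proof (induction j)
  case 0 then show ?case by simp
next
  case (Suc j)
  have "QQ ^ Suc j * z k = QQ * (QQ ^ j * z k)" by (simp add: mult.assoc)
  also have "\<dots> = (QQ * z k) * QQ ^ j" using Suc by (simp add: mult.assoc)
  also have "\<dots> = z k * QQ ^ Suc j" using Q_z[OF Suc.prems] by (simp add: mult.assoc)
  finally show ?case .
qed

lemma wpow_Qpow: "w n ^ b * QQ ^ j = QQ ^ j * w n ^ b"
proof -
  have a: "w n * QQ ^ j = QQ ^ j * w n" for j
  proof (induction j)
    case 0 then show ?case by simp
  next
    case (Suc j)
    have "w n * QQ ^ Suc j = (w n * QQ) * QQ ^ j" by (simp add: mult.assoc)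
    also have "\<dots> = QQ * (w n * QQ ^ j)" by (simp add: w_Q mult.assoc)
    also have "\<dots> = QQ ^ Suc j * w n" using Suc by (simp add: mult.assoc)
    finally show ?case .
  qed
  show ?thesis
  proof (induction b)
    case 0 then show ?case by simp
  next
    case (Suc b)
    have "w n ^ Suc b * QQ ^ j = w n * (w n ^ b * QQ ^ j)" by (simp add: mult.assoc)
    also have "\<dots> = (w n * QQ ^ j) * w n ^ b" using Suc by (simp add: mult.assoc)
    also have "\<dots> = QQ ^ j * w n ^ Suc b" using a by (simp add: mult.assoc)
    finally show ?case .
  qed
qed

end

context ZN begin

definition Lev :: "nat \<Rightarrow> (nat \<Rightarrow> nat) set" where "Lev j = {la. mi n la \<and> deg n la = j}"
definition Pm :: "(nat \<Rightarrow> nat) \<Rightarrow> real" where "Pm la = (\<Prod>i\<in>{1..n}. qf (la i))"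
definition Mq :: "(nat \<Rightarrow> nat) \<Rightarrow> real" where "Mq la = qf (deg n la) / Pm la"

lemma Pm_pos: "0 < Pm la" unfolding Pm_def by (rule prod_pos) (auto intro: qf_pos)
lemma qf_0[simp]: "qf 0 = 1" by (simp add: qf_def)
lemma qbr_0[simp]: "qbr q 0 = 0" by (simp add: qbr_def)

lemma finite_Lev: "finite (Lev j)"
proof -
  have "Lev j \<subseteq> {f. \<forall>x. (x \<in> {0..n} \<longrightarrow> f x \<in> {0..j}) \<and> (x \<notin> {0..n} \<longrightarrow> f x = 0)}"
  proof
    fix f assume "f \<in> Lev j"
    then have mi: "mi n f" and d: "deg n f = j" by (auto simp: Lev_def)
    show "f \<in> {f. \<forall>x. (x \<in> {0..n} \<longrightarrow> f x \<in> {0..j}) \<and> (x \<notin> {0..n} \<longrightarrow> f x = 0)}"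
    proof (intro CollectI allI conjI impI)
      fix x assume x: "x \<in> {0..n}"
      show "f x \<in> {0..j}"
      proof (cases "x = 0")
        case True then show ?thesis using mi by (simp add: mi_def)
      next
        case False
        then have "x \<in> {1..n}" using x by auto
        then have "f x \<le> deg n f" unfolding deg_def by (rule member_le_sum) auto
        then show ?thesis using d by simp
      qed
    next
      fix x assume "x \<notin> {0..n}" then show "f x = 0" using mi by (simp add: mi_def)
    qed
  qed
  then show ?thesis by (rule finite_subset) (rule finite_set_of_finite_funs; simp)
qed

lemma Lev0: "Lev 0 = {\<lambda>i. 0}"
proof
  show "Lev 0 \<subseteq> {\<lambda>i. 0}"
  proof
    fix f assume "f \<in> Lev 0"
    then have mi: "mi n f" and d: "deg n f = 0" by (auto simp: Lev_def)
    have "\<forall>i\<in>{1..n}. f i = 0" using d by (simp add: deg_def)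
    then have "f = (\<lambda>i. 0)" using mi by (auto simp: mi_def fun_eq_iff) (metis atLeastAtMost_iff le_zero_eq not_less not_less_eq_eq)
    then show "f \<in> {\<lambda>i. 0}" by simp
  qed
  show "{\<lambda>i. 0} \<subseteq> Lev 0" by (simp add: Lev_def mi_def deg_def)
qed

lemma mono00: "Defs.mono z w n (\<lambda>i. 0) (\<lambda>i. 0) = 1"
  by (simp add: mono_def map_replicate_const)

lemma qsum: fixes f :: "nat \<Rightarrow> nat" and N :: nat shows "(\<Sum>k\<in>{1..N}. qbr q (f k) * (inverse q ^ 2) ^ (\<Sum>i\<in>{1..<k}. f i)) = qbr q (\<Sum>i\<in>{1..N}. f i)"
proof (induction N)
  case 0 then show ?case by simp
next
  case (Suc N)
  have e: "{1..<Suc N} = {1..N}" by auto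
  have s1: "(\<Sum>k\<in>{1..Suc N}. G k) = (\<Sum>k\<in>{1..N}. G k) + G (Suc N)" for G :: "nat \<Rightarrow> real" by simp
  have "(\<Sum>k\<in>{1..Suc N}. qbr q (f k) * (inverse q ^ 2) ^ (\<Sum>i\<in>{1..<k}. f i))
      = qbr q (\<Sum>i\<in>{1..N}. f i) + qbr q (f (Suc N)) * (inverse q ^ 2) ^ (\<Sum>i\<in>{1..<Suc N}. f i)"
    unfolding s1 Suc.IH ..
  also have "\<dots> = qbr q (\<Sum>i\<in>{1..N}. f i) + (inverse q ^ 2) ^ (\<Sum>i\<in>{1..N}. f i) * qbr q (f (Suc N))"
    unfolding e by (simp add: mult.commute)
  also have "\<dots> = qbr q ((\<Sum>i\<in>{1..N}. f i) + f (Suc N))" by (rule qbr_add[OF q0 q1, symmetric])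
  also have "\<dots> = qbr q (\<Sum>i\<in>{1..Suc N}. f i)" by simp
  finally show ?case .
qed

lemma Mq_dec:
  assumes nu: "nu \<in> Lev (Suc j)" and k: "k \<in> {1..n}" and nk: "nu k \<noteq> 0"
  shows "Mq (nu(k := nu k - 1)) = qf j * qbr q (nu k) / Pm nu"
proof -
  have d: "deg n nu = Suc j" using nu by (simp add: Lev_def)
  have "deg n (nu(k := nu k - 1)) + nu k = deg n nu + (nu k - 1)"
    unfolding deg_def by (rule sum_upd1) (use k in auto)
  then have d': "deg n (nu(k := nu k - 1)) = j" using d nk by simp
  have "Pm (nu(k := nu k - 1)) * qf (nu k) = Pm nu * qf (nu k - 1)"
  proof -
    let ?f = "\<lambda>i. qf (nu i)"
    have fe: "(\<lambda>i. qf ((nu(k := nu k - 1)) i)) = ?f(k := qf (nu k - 1))" by (auto simp: fun_eq_iff)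
    have h: "prod (?f(k := qf (nu k - 1))) {1..n} * ?f k = prod ?f {1..n} * qf (nu k - 1)"
      by (rule prod_upd1) (use k in auto)
    show ?thesis using h unfolding Pm_def fe .
  qed
  moreover have "qf (nu k) = qf (nu k - 1) * qbr q (nu k)"
    using nk qf_Suc[of "nu k - 1"] by simp
  ultimately have "Pm (nu(k := nu k - 1)) * qbr q (nu k) * qf (nu k - 1) = Pm nu * qf (nu k - 1)"
    by (simp add: ac_simps)
  then have P: "Pm (nu(k := nu k - 1)) * qbr q (nu k) = Pm nu" using qf_pos[of "nu k - 1"] by simp
  have "Pm (nu(k := nu k - 1)) \<noteq> 0" "Pm nu \<noteq> 0" using Pm_pos by (simp_all add: less_imp_neq[symmetric])
  then show ?thesis unfolding Mq_def d' using P qbr_nz[OF nk] by (simp add: field_simps)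
qed

lemma pascal:
  assumes nu: "nu \<in> Lev (Suc j)"
  shows "(\<Sum>k\<in>{k\<in>{1..n}. nu k \<noteq> 0}. Mq (nu(k := nu k - 1)) * inverse q ^ (\<Sum>i\<in>{1..<k}. (nu(k := nu k - 1)) i)
      * inverse q ^ (\<Sum>i\<in>{1..<k}. (nu(k := nu k - 1)) i)) = Mq nu"
proof -
  have d: "deg n nu = Suc j" using nu by (simp add: Lev_def)
  have s: "(\<Sum>i\<in>{1..<k}. (nu(k := nu k - 1)) i) = (\<Sum>i\<in>{1..<k}. nu i)" for k by (rule sum.cong) auto
  have "(\<Sum>k\<in>{k\<in>{1..n}. nu k \<noteq> 0}. Mq (nu(k := nu k - 1)) * inverse q ^ (\<Sum>i\<in>{1..<k}. (nu(k := nu k - 1)) i)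
      * inverse q ^ (\<Sum>i\<in>{1..<k}. (nu(k := nu k - 1)) i))
     = (\<Sum>k\<in>{k\<in>{1..n}. nu k \<noteq> 0}. qf j / Pm nu * (qbr q (nu k) * (inverse q ^ 2) ^ (\<Sum>i\<in>{1..<k}. nu i)))"
  proof (intro sum.cong refl)
    fix k assume "k \<in> {k \<in> {1..n}. nu k \<noteq> 0}"
    then have k: "k \<in> {1..n}" "nu k \<noteq> 0" by auto
    show "Mq (nu(k := nu k - 1)) * inverse q ^ (\<Sum>i\<in>{1..<k}. (nu(k := nu k - 1)) i)
      * inverse q ^ (\<Sum>i\<in>{1..<k}. (nu(k := nu k - 1)) i) = qf j / Pm nu * (qbr q (nu k) * (inverse q ^ 2) ^ (\<Sum>i\<in>{1..<k}. nu i))"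
      unfolding s Mq_dec[OF nu k] by (simp add: power2_eq_square power_mult_distrib)
  qed
  also have "\<dots> = qf j / Pm nu * (\<Sum>k\<in>{k\<in>{1..n}. nu k \<noteq> 0}. qbr q (nu k) * (inverse q ^ 2) ^ (\<Sum>i\<in>{1..<k}. nu i))"
    by (simp add: sum_distrib_left)
  also have "(\<Sum>k\<in>{k\<in>{1..n}. nu k \<noteq> 0}. qbr q (nu k) * (inverse q ^ 2) ^ (\<Sum>i\<in>{1..<k}. nu i))
      = (\<Sum>k\<in>{1..n}. qbr q (nu k) * (inverse q ^ 2) ^ (\<Sum>i\<in>{1..<k}. nu i))"
    by (rule sum.mono_neutral_left) auto
  also have "\<dots> = qbr q (Suc j)" using qsum[of nu n] d by (simp add: deg_def)
  also have "qf j / Pm nu * qbr q (Suc j) = Mq nu" by (simp add: Mq_def d qf_Suc)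
  finally show ?thesis .
qed

end

context ZN begin

lemma zMw: assumes k: "k \<in> {1..n}"
  shows "z k * (sc (of_real a) * Defs.mono z w n la la) * w k =
    sc (of_real (a * inverse q ^ (\<Sum>i\<in>{1..<k}. la i) * inverse q ^ (\<Sum>i\<in>{1..<k}. la i))) *
      Defs.mono z w n (la(k := la k + 1)) (la(k := la k + 1))"
proof -
  let ?S = "\<Sum>i\<in>{1..<k}. la i"
  let ?l = "la(k := la k + 1)"
  have "z k * (sc (of_real a) * Defs.mono z w n la la) * w k = sc (of_real a) * ((z k * Defs.mono z w n la la) * w k)"
    by (simp only: mult.assoc sc_lc[of "z k"])
  also have "\<dots> = sc (of_real a) * (sc (iq ^ ?S) * (Defs.mono z w n ?l la * w k))"
    by (simp only: z_mono[OF k] mult.assoc)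
  also have "\<dots> = sc (of_real a) * (sc (iq ^ ?S) * (sc (iq ^ ?S) * Defs.mono z w n ?l ?l))"
    by (simp only: w_mono[OF k])
  also have "\<dots> = sc (of_real a * iq ^ ?S * iq ^ ?S) * Defs.mono z w n ?l ?l" by (simp only: sc_left mult.assoc)
  also have "of_real a * iq ^ ?S * iq ^ ?S = of_real (a * inverse q ^ ?S * inverse q ^ ?S)" by simp
  finally show ?thesis .
qed

definition hq :: "nat \<times> (nat \<Rightarrow> nat) \<Rightarrow> real" where
  "hq p = Mq (snd p) * inverse q ^ (\<Sum>i\<in>{1..<fst p}. snd p i) * inverse q ^ (\<Sum>i\<in>{1..<fst p}. snd p i)"
definition Tq :: "nat \<times> (nat \<Rightarrow> nat) \<Rightarrow> (nat \<Rightarrow> nat) \<times> (nat \<Rightarrow> nat)" where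
  "Tq p = ((snd p)(fst p := snd p (fst p) + 1), (snd p)(fst p := snd p (fst p) + 1))"

lemma Qstep: assumes IH: "QQ ^ j = (\<Sum>la\<in>Lev j. sc (of_real (Mq la)) * Defs.mono z w n la la)"
  shows "QQ ^ Suc j = (\<Sum>p\<in>{1..n} \<times> Lev j. sc (of_real (hq p)) * monop (Tq p))"
proof -
  have "QQ ^ Suc j = QQ ^ j * QQ" by (rule power_Suc2)
  also have "\<dots> = (\<Sum>k\<in>{1..n}. QQ ^ j * (z k * w k))" by (simp add: Q_def sum_distrib_left)
  also have "\<dots> = (\<Sum>k\<in>{1..n}. z k * QQ ^ j * w k)"
    by (intro sum.cong refl) (simp add: mult.assoc[symmetric] Qpow_z)
  also have "\<dots> = (\<Sum>k\<in>{1..n}. \<Sum>la\<in>Lev j. z k * (sc (of_real (Mq la)) * Defs.mono z w n la la) * w k)"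
    by (simp add: IH sum_distrib_left sum_distrib_right)
  also have "\<dots> = (\<Sum>k\<in>{1..n}. \<Sum>la\<in>Lev j. sc (of_real (hq (k, la))) * monop (Tq (k, la)))"
    by (intro sum.cong refl) (simp add: zMw hq_def Tq_def)
  also have "\<dots> = (\<Sum>p\<in>{1..n} \<times> Lev j. sc (of_real (hq p)) * monop (Tq p))"
    by (simp add: sum.cartesian_product case_prod_beta)
  finally show ?thesis .
qed

lemma Lev_upd: assumes "la \<in> Lev j" "k \<in> {1..n}" shows "la(k := la k + 1) \<in> Lev (Suc j)"
proof -
  have "deg n (la(k := la k + 1)) + la k = deg n la + (la k + 1)"
    unfolding deg_def by (rule sum_upd1) (use assms in auto)
  then show ?thesis using assms mi_upd[of la k] by (auto simp: Lev_def)
qed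

lemma Lev_dec: assumes "nu \<in> Lev (Suc j)" "k \<in> {1..n}" "nu k \<noteq> 0" shows "nu(k := nu k - 1) \<in> Lev j"
proof -
  have "deg n (nu(k := nu k - 1)) + nu k = deg n nu + (nu k - 1)"
    unfolding deg_def by (rule sum_upd1) (use assms in auto)
  then show ?thesis using assms mi_upd[of nu k] by (auto simp: Lev_def)
qed

lemma Qpow: "QQ ^ j = (\<Sum>la\<in>Lev j. sc (of_real (Mq la)) * Defs.mono z w n la la)"
proof (induction j)
  case 0
  have "Mq (\<lambda>i. 0) = 1" by (simp add: Mq_def Pm_def deg_def)
  then show ?case by (simp add: Lev0 mono00)
next
  case (Suc j)
  define S where "S = {1..n} \<times> Lev j"
  have finS: "finite S" using finite_Lev by (simp add: S_def)
  have L: "QQ ^ Suc j = (\<Sum>p\<in>S. sc (of_real (hq p)) * monop (Tq p))" using Qstep[OF Suc.IH] by (simp add: S_def)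
  have R: "(\<Sum>la\<in>Lev (Suc j). sc (of_real (Mq la)) * Defs.mono z w n la la)
      = (\<Sum>la\<in>Lev (Suc j). sc (of_real (Mq la)) * monop ((\<lambda>la. (la, la)) la))" by simp
  have TqL: "Tq p = (nu, nu) \<and> nu \<in> Lev (Suc j)" if "p \<in> S" "Tq p = t" "nu = fst t" for p t nu
    using that Lev_upd[of "snd p" j "fst p"] by (auto simp: S_def Tq_def)
  have cL: "crd (\<Sum>p\<in>S. sc (of_real (hq p)) * monop (Tq p)) = (\<lambda>t. \<Sum>p\<in>{p\<in>S. Tq p = t}. of_real (hq p))"
  proof (rule coord_sum_gen[OF finS])
    fix p assume "p \<in> S"
    then have "fst (Tq p) \<in> Lev (Suc j)" using TqL[of p "Tq p"] by auto
    moreover have "snd (Tq p) = fst (Tq p)" by (simp add: Tq_def)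
    ultimately
    show "mi n (fst (Tq p)) \<and> mi n (snd (Tq p))" by (simp add: Lev_def)
  qed
  have cR: "crd (\<Sum>la\<in>Lev (Suc j). sc (of_real (Mq la)) * monop ((\<lambda>la. (la, la)) la))
      = (\<lambda>t. \<Sum>la\<in>{la\<in>Lev (Suc j). (la, la) = t}. of_real (Mq la))"
    by (rule coord_sum_gen[OF finite_Lev]) (simp add: Lev_def)
  show ?case
    unfolding L R
  proof (rule coord_inj, unfold cL cR, rule ext)
    fix t
    show "(\<Sum>p\<in>{p\<in>S. Tq p = t}. of_real (hq p)) = (\<Sum>la\<in>{la\<in>Lev (Suc j). (la, la) = t}. (of_real (Mq la) :: complex))"
    proof (cases "fst t = snd t \<and> fst t \<in> Lev (Suc j)")
      case True
      define nu where "nu = fst t"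
      have t: "t = (nu, nu)" using True by (simp add: nu_def prod_eq_iff)
      have nuL: "nu \<in> Lev (Suc j)" using True unfolding nu_def by blast
      define K where "K = {k\<in>{1..n}. nu k \<noteq> 0}"
      have Rs: "{la\<in>Lev (Suc j). (la, la) = t} = {nu}" using nuL by (auto simp: t)
      have Ls: "{p\<in>S. Tq p = t} = (\<lambda>k. (k, nu(k := nu k - 1))) ` K"
      proof
        show "{p\<in>S. Tq p = t} \<subseteq> (\<lambda>k. (k, nu(k := nu k - 1))) ` K"
        proof
          fix p assume p: "p \<in> {p\<in>S. Tq p = t}"
          obtain k la where pk: "p = (k, la)" by (cases p)
          have k: "k \<in> {1..n}" and e: "la(k := la k + 1) = nu" using p by (auto simp: pk S_def Tq_def t)
          have "nu k = la k + 1" using e by (metis fun_upd_same)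
          moreover have "la = nu(k := nu k - 1)" using e by (auto simp: fun_eq_iff split: if_splits)
          ultimately show "p \<in> (\<lambda>k. (k, nu(k := nu k - 1))) ` K" using k by (auto simp: pk K_def)
        qed
        show "(\<lambda>k. (k, nu(k := nu k - 1))) ` K \<subseteq> {p\<in>S. Tq p = t}"
        proof
          fix p assume "p \<in> (\<lambda>k. (k, nu(k := nu k - 1))) ` K"
          then obtain k where k: "k \<in> {1..n}" "nu k \<noteq> 0" and pk: "p = (k, nu(k := nu k - 1))" by (auto simp: K_def)
          have "nu(k := nu k - 1) \<in> Lev j" using Lev_dec[OF nuL k] .
          moreover have "Tq p = t" using k by (auto simp: pk Tq_def t fun_eq_iff)
          ultimately show "p \<in> {p\<in>S. Tq p = t}" using k by (simp add: S_def pk)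
        qed
      qed
      have inj: "inj_on (\<lambda>k. (k, nu(k := nu k - 1))) K" by (rule inj_onI) simp
      have "(\<Sum>p\<in>{p\<in>S. Tq p = t}. (of_real (hq p) :: complex)) = (\<Sum>k\<in>K. of_real (hq (k, nu(k := nu k - 1))))"
        unfolding Ls sum.reindex[OF inj] comp_def ..
      also have "\<dots> = of_real (\<Sum>k\<in>K. hq (k, nu(k := nu k - 1)))" by simp
      also have "(\<Sum>k\<in>K. hq (k, nu(k := nu k - 1))) = Mq nu" unfolding K_def hq_def fst_conv snd_conv
        by (rule pascal[OF nuL])
      finally show ?thesis unfolding Rs by simp
    next
      case False
      have Ls: "{p\<in>S. Tq p = t} = {}"
      proof (rule ccontr)
        assume "{p\<in>S. Tq p = t} \<noteq> {}"
        then obtain p where p: "p \<in> S" "Tq p = t" by blast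
        have h: "Tq p = (fst t, fst t) \<and> fst t \<in> Lev (Suc j)" using TqL[OF p refl] .
        then have "t = (fst t, fst t)" using p(2) by simp
        then have "snd t = fst t" by (metis snd_conv)
        then show False using False h by simp
      qed
      have Rs: "{la\<in>Lev (Suc j). (la, la) = t} = {}" using False by auto
      show ?thesis unfolding Ls Rs by simp
    qed
  qed
qed

end

context ZN begin

lemma sl_upd_n[simp]: "sl (r(n := v)) = sl r"
  unfolding sl_def by (rule sum.cong) auto

lemma zn_pow_mono: "z n ^ a * Defs.mono z w n la mu = sc (iq ^ (a * sl la)) * Defs.mono z w n (la(n := la n + a)) mu"
proof (induction a)
  case 0 then show ?case by simp
next
  case (Suc a)
  have nn: "n \<in> {1..n}" using n2 by auto
  have s: "(\<Sum>i\<in>{1..<n}. (la(n := la n + a)) i) = sl la" unfolding sl_def by (rule sum.cong) auto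
  have "z n ^ Suc a * Defs.mono z w n la mu = z n * (z n ^ a * Defs.mono z w n la mu)" by (simp add: mult.assoc)
  also have "\<dots> = sc (iq ^ (a * sl la)) * (z n * Defs.mono z w n (la(n := la n + a)) mu)"
    by (simp only: Suc sc_lc[of "z n"])
  also have "\<dots> = sc (iq ^ (a * sl la)) * (sc (iq ^ sl la) * Defs.mono z w n (la(n := la n + Suc a)) mu)"
    by (simp only: z_mono[OF nn] s) simp
  also have "\<dots> = sc (iq ^ (Suc a * sl la)) * Defs.mono z w n (la(n := la n + Suc a)) mu"
    by (simp add: sc_left power_add mult.commute)
  finally show ?case .
qed

lemma mono_wn_pow: "Defs.mono z w n la mu * w n ^ b = sc (iq ^ (b * sl mu)) * Defs.mono z w n la (mu(n := mu n + b))"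
proof (induction b)
  case 0 then show ?case by simp
next
  case (Suc b)
  have nn: "n \<in> {1..n}" using n2 by auto
  have s: "(\<Sum>i\<in>{1..<n}. (mu(n := mu n + b)) i) = sl mu" unfolding sl_def by (rule sum.cong) auto
  have "Defs.mono z w n la mu * w n ^ Suc b = (Defs.mono z w n la mu * w n ^ b) * w n" by (simp only: mult.assoc power_Suc2)
  also have "\<dots> = sc (iq ^ (b * sl mu)) * (Defs.mono z w n la (mu(n := mu n + b)) * w n)"
    by (simp only: Suc mult.assoc)
  also have "\<dots> = sc (iq ^ (b * sl mu)) * (sc (iq ^ sl mu) * Defs.mono z w n la (mu(n := mu n + Suc b)))"
    by (simp only: w_mono[OF nn] s) simp
  also have "\<dots> = sc (iq ^ (Suc b * sl mu)) * Defs.mono z w n la (mu(n := mu n + Suc b))"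
    by (simp add: sc_left power_add mult.commute)
  finally show ?case .
qed

context fixes l m :: nat
begin

definition Pj :: "nat \<Rightarrow> 'a" where "Pj j = z n ^ (l - j) * w n ^ (m - j) * QQ ^ j"

definition gP :: "nat \<Rightarrow> nat \<Rightarrow> complex" where
  "gP j s = (if s \<le> j then of_real (qf j / qf (j - s) * inverse q ^ ((l - j + (m - j)) * s)) else 0)"

definition TP :: "nat \<Rightarrow> (nat \<Rightarrow> nat) \<Rightarrow> (nat \<Rightarrow> nat) \<times> (nat \<Rightarrow> nat)" where
  "TP j la = (la(n := la n + (l - j)), la(n := la n + (m - j)))"
definition hP :: "nat \<Rightarrow> (nat \<Rightarrow> nat) \<Rightarrow> real" where
  "hP j la = Mq la * inverse q ^ ((l - j) * sl la) * inverse q ^ ((m - j) * sl la)"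

lemma Pj_sum: "Pj j = (\<Sum>la\<in>Lev j. sc (of_real (hP j la)) * monop (TP j la))"
proof -
  have "Pj j = z n ^ (l - j) * (QQ ^ j * w n ^ (m - j))" by (simp add: Pj_def mult.assoc wpow_Qpow)
  also have "\<dots> = (\<Sum>la\<in>Lev j. z n ^ (l - j) * (sc (of_real (Mq la)) * Defs.mono z w n la la) * w n ^ (m - j))"
    by (simp add: Qpow sum_distrib_left sum_distrib_right mult.assoc)
  also have "\<dots> = (\<Sum>la\<in>Lev j. sc (of_real (hP j la)) * monop (TP j la))"
  proof (intro sum.cong refl)
    fix la
    have "z n ^ (l - j) * (sc (of_real (Mq la)) * Defs.mono z w n la la) * w n ^ (m - j)
        = sc (of_real (Mq la)) * ((z n ^ (l - j) * Defs.mono z w n la la) * w n ^ (m - j))"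
      by (simp only: mult.assoc sc_lc[of "z n ^ (l - j)"])
    also have "\<dots> = sc (of_real (Mq la)) * (sc (iq ^ ((l - j) * sl la)) * (sc (iq ^ ((m - j) * sl la)) *
        Defs.mono z w n (la(n := la n + (l - j))) (la(n := la n + (m - j)))))"
      by (simp only: zn_pow_mono mono_wn_pow mult.assoc)
    also have "\<dots> = sc (of_real (hP j la)) * monop (TP j la)"
      by (simp add: sc_left hP_def TP_def mult.assoc)
    finally show "z n ^ (l - j) * (sc (of_real (Mq la)) * Defs.mono z w n la la) * w n ^ (m - j)
        = sc (of_real (hP j la)) * monop (TP j la)" .
  qed
  finally show ?thesis .
qed

lemma Wt_Pm: "Pm (r(n := v)) = Wt r * qf v"
proof -
  have sp: "{1..n} = insert n {1..<n}" using n2 by auto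
  have "Pm (r(n := v)) = qf v * (\<Prod>i\<in>{1..<n}. qf ((r(n := v)) i))" unfolding Pm_def sp by simp
  also have "(\<Prod>i\<in>{1..<n}. qf ((r(n := v)) i)) = Wt r" unfolding Wt_def by (rule prod.cong) auto
  finally show ?thesis by (simp only: mult.commute)
qed

lemma mi_upd_n: "mi n r \<Longrightarrow> mi n (r(n := a))" using mi_upd[of r n a] n2 by simp

lemma coord_Pj:
  assumes jl: "j \<le> l" and jm: "j \<le> m"
  shows "crd (Pj j) = Vf l m (gP j)"
proof -
  have nn: "n \<in> {1..n}" using n2 by auto
  have c: "crd (Pj j) = (\<lambda>t. \<Sum>la\<in>{la\<in>Lev j. TP j la = t}. of_real (hP j la))"
    unfolding Pj_sum by (rule coord_sum_gen[OF finite_Lev]) (auto simp: Lev_def TP_def mi_upd_n)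
  show ?thesis
  proof (rule ext)
    fix t :: "(nat \<Rightarrow> nat) \<times> (nat \<Rightarrow> nat)"
    obtain r s where t: "t = (r, s)" by (cases t)
    define la0 where "la0 = r(n := j - sl r)"
    have set: "{la\<in>Lev j. TP j la = t} = (if inD l m t \<and> sl r \<le> j then {la0} else {})"
    proof (rule set_eqI, rule iffI)
      fix la assume "la \<in> {la\<in>Lev j. TP j la = t}"
      then have L: "la \<in> Lev j" and r: "r = la(n := la n + (l - j))" and s: "s = la(n := la n + (m - j))"
        by (auto simp: TP_def t)
      have mla: "mi n la" and dla: "deg n la = j" using L by (auto simp: Lev_def)
      have dsp: "deg n la = sl la + la n" by (rule deg_split)
      have slr: "sl r = sl la" by (simp add: r)
      have sls: "sl s = sl la" by (simp add: s)
      have "deg n r = sl r + r n" by (rule deg_split)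
      then have dr: "deg n r = l" using slr dsp dla jl by (simp add: r)
      have "deg n s = sl s + s n" by (rule deg_split)
      then have ds: "deg n s = m" using sls dsp dla jm by (simp add: s)
      have D: "inD l m t" unfolding inD_def t fst_conv snd_conv
        using dr ds mi_upd[OF mla, of n] nn by (auto simp: r s)
      have le: "sl r \<le> j" using slr dsp dla by simp
      have "la = la0" unfolding la0_def using dsp dla slr by (auto simp: r fun_eq_iff)
      then show "la \<in> (if inD l m t \<and> sl r \<le> j then {la0} else {})" using D le by simp
    next
      fix la assume A: "la \<in> (if inD l m t \<and> sl r \<le> j then {la0} else {})"
      then have D: "inD l m t" and le: "sl r \<le> j" and la: "la = la0" by (auto split: if_splits)
      have mr: "mi n r" and ms: "mi n s" and eq: "\<forall>i\<in>{1..<n}. r i = s i" and dr: "deg n r = l" and ds: "deg n s = m"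
        using D by (auto simp: inD_def t)
      have sls: "sl s = sl r" unfolding sl_def using eq by (intro sum.cong) auto
      have rn: "r n = l - sl r" using dr deg_split[of r] by simp
      have sn: "s n = m - sl r" using ds deg_split[of s] sls by simp
      have "deg n la0 = sl la0 + la0 n" by (rule deg_split)
      then have "deg n la0 = j" using le by (simp add: la0_def)
      then have L: "la0 \<in> Lev j" using mi_upd[OF mr, of n] nn by (simp add: Lev_def la0_def)
      have "la0(n := la0 n + (l - j)) = r" using rn le jl by (auto simp: la0_def fun_eq_iff)
      moreover have "la0(n := la0 n + (m - j)) = s"
      proof
        fix i
        show "(la0(n := la0 n + (m - j))) i = s i"
        proof (cases "i \<in> {1..<n}")
          case True then show ?thesis using eq by (auto simp: la0_def)
        next
          case False
          show ?thesis
          proof (cases "i = n")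
            case True then show ?thesis using sn le jm by (simp add: la0_def)
          next
            case False2: False
            then have "i = 0 \<or> n < i" using False by auto
            then show ?thesis using mr ms False2 by (auto simp: la0_def mi_def)
          qed
        qed
      qed
      ultimately show "la \<in> {la\<in>Lev j. TP j la = t}" using L la by (simp add: TP_def t)
    qed
    show "crd (Pj j) t = Vf l m (gP j) t"
    proof (cases "inD l m t \<and> sl r \<le> j")
      case True
      then have D: "inD l m t" and le: "sl r \<le> j" by auto
      have "crd (Pj j) t = of_real (hP j la0)" unfolding c set using True by simp
      also have "hP j la0 = qf j / qf (j - sl r) * inverse q ^ ((l - j + (m - j)) * sl r) / Wt r"
      proof -
        have "deg n la0 = sl la0 + la0 n" by (rule deg_split)
        then have d0: "deg n la0 = j" using le by (simp add: la0_def)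
        have "Pm la0 = Wt r * qf (j - sl r)" unfolding la0_def by (rule Wt_Pm)
        moreover have d0': "deg n (r(n := j - sl r)) = j" using d0 unfolding la0_def .
        ultimately show ?thesis using Wt_nz[of r] qf_pos[of "j - sl r"]
          by (simp add: hP_def Mq_def d0' la0_def power_add add_mult_distrib field_simps)
      qed
      also have "of_real (qf j / qf (j - sl r) * inverse q ^ ((l - j + (m - j)) * sl r) / Wt r) = Vf l m (gP j) t"
        using D le by (simp add: Vf_def gP_def t)
      finally show ?thesis .
    next
      case False
      have "crd (Pj j) t = 0" unfolding c set using False by (simp only: if_False sum.empty)
      moreover have "Vf l m (gP j) t = 0" using False by (auto simp: Vf_def gP_def t)
      ultimately show ?thesis by simp
    qed
  qed
qed

end
end

lemma tri_solve:
  fixes G :: "nat \<Rightarrow> nat \<Rightarrow> complex"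
  assumes z: "\<And>j s. j < s \<Longrightarrow> G j s = 0" and nz: "\<And>j. G j j \<noteq> 0"
  shows "\<exists>c. \<forall>s\<le>K. g s = (\<Sum>j\<in>{0..K}. c j * G j s)"
proof (induction K arbitrary: g)
  case 0
  show ?case by (rule exI[of _ "\<lambda>j. g 0 / G 0 0"]) (simp add: nz)
next
  case (Suc K)
  define cK where "cK = g (Suc K) / G (Suc K) (Suc K)"
  define g' where "g' s = g s - cK * G (Suc K) s" for s
  obtain c' where c': "\<forall>s\<le>K. g' s = (\<Sum>j\<in>{0..K}. c' j * G j s)" using Suc.IH by blast
  define c where "c = c'(Suc K := cK)"
  have "g s = (\<Sum>j\<in>{0..Suc K}. c j * G j s)" if s: "s \<le> Suc K" for s
  proof -
    have e: "(\<Sum>j\<in>{0..K}. c j * G j s) = (\<Sum>j\<in>{0..K}. c' j * G j s)"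
      by (rule sum.cong) (auto simp: c_def)
    have "(\<Sum>j\<in>{0..Suc K}. c j * G j s) = (\<Sum>j\<in>{0..K}. c' j * G j s) + cK * G (Suc K) s"
      by (simp add: e c_def)
    also have "\<dots> = g s"
    proof (cases "s \<le> K")
      case True
      then have "g s - cK * G (Suc K) s = (\<Sum>j\<in>{0..K}. c' j * G j s)" using c' by (simp add: g'_def)
      then show ?thesis by (metis diff_add_cancel)
    next
      case False
      then have sK: "s = Suc K" using s by simp
      have "(\<Sum>j\<in>{0..K}. c' j * G j s) = 0" by (rule sum.neutral) (auto simp: sK z)
      then show ?thesis using nz[of "Suc K"] by (simp add: sK cK_def)
    qed
    finally show ?thesis by simp
  qed
  then show ?case by blast
qed

lemma tri_unique:
  fixes G :: "nat \<Rightarrow> nat \<Rightarrow> complex"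
  assumes z: "\<And>j s. j < s \<Longrightarrow> G j s = 0" and nz: "\<And>j. G j j \<noteq> 0"
  shows "(\<forall>s\<le>K. (\<Sum>j\<in>{0..K}. c j * G j s) = 0) \<Longrightarrow> \<forall>j\<le>K. c j = 0"
proof (induction K)
  case 0 then show ?case using nz[of 0] by simp
next
  case (Suc K)
  have "(\<Sum>j\<in>{0..Suc K}. c j * G j (Suc K)) = c (Suc K) * G (Suc K) (Suc K)"
  proof -
    have "(\<Sum>j\<in>{0..K}. c j * G j (Suc K)) = 0" by (rule sum.neutral) (auto simp: z)
    then show ?thesis by simp
  qed
  then have cS: "c (Suc K) = 0" using Suc.prems nz[of "Suc K"] by auto
  have "\<forall>s\<le>K. (\<Sum>j\<in>{0..K}. c j * G j s) = 0"
  proof (intro allI impI)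
    fix s assume "s \<le> K"
    then have "(\<Sum>j\<in>{0..Suc K}. c j * G j s) = 0" using Suc.prems by simp
    then show "(\<Sum>j\<in>{0..K}. c j * G j s) = 0" using cS by simp
  qed
  then have "\<forall>j\<le>K. c j = 0" by (rule Suc.IH)
  then show ?case using cS le_Suc_eq by auto
qed

context ZN begin
context fixes l m :: nat
begin

lemma gP_z: "j < s \<Longrightarrow> gP l m j s = 0" by (simp add: gP_def)
lemma gP_nz: "gP l m j j \<noteq> 0"
  using qf_pos[of j] q0 by (simp add: gP_def)

lemma inD_sl: assumes "inD l m p" shows "sl (fst p) \<le> min l m"
proof -
  have e: "\<forall>i\<in>{1..<n}. fst p i = snd p i" and dl: "deg n (fst p) = l" and dm: "deg n (snd p) = m"
    using assms by (auto simp: inD_def)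
  have "sl (snd p) = sl (fst p)" unfolding sl_def using e by (intro sum.cong) auto
  then show ?thesis using deg_split[of "fst p"] deg_split[of "snd p"] dl dm by simp
qed

lemma bp_inD: assumes "s \<le> min l m" shows "inD l m (bfun l s, bfun m s)" and "sl (bfun l s) = s"
proof -
  have n1: "n \<noteq> 1" "1 < n" using n2 by auto
  have sl: "sl (bfun L s) = s" for L
  proof -
    have "sl (bfun L s) = bfun L s 1" by (rule sl_single) (auto simp: bfun_def)
    then show ?thesis by (simp add: bfun_def)
  qed
  show "sl (bfun l s) = s" by (rule sl)
  have mi: "mi n (bfun L s)" for L using n1 by (auto simp: mi_def bfun_def)
  have dg: "deg n (bfun L s) = L" if "s \<le> L" for L
    using deg_split[of "bfun L s"] sl[of L] that n1 by (simp add: bfun_def)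
  show "inD l m (bfun l s, bfun m s)" using mi dg assms by (auto simp: inD_def bfun_def)
qed

lemma Vf_bp: assumes "s \<le> min l m" shows "Vf l m g (bfun l s, bfun m s) = g s / of_real (Wt (bfun l s))"
  using bp_inD[OF assms] by (simp add: Vf_def)

lemma Vf_cong: assumes "\<forall>s\<le>min l m. g s = g' s" shows "Vf l m g = Vf l m g'"
proof
  fix p show "Vf l m g p = Vf l m g' p" using assms inD_sl[of p] by (simp add: Vf_def)
qed

abbreviation "KK \<equiv> min l m"

lemma coord_comb: "crd (\<Sum>j\<in>{0..KK}. sc (c j) * Pj l m j) = Vf l m (\<lambda>s. \<Sum>j\<in>{0..KK}. c j * gP l m j s)"
proof
  fix p
  have "crd (\<Sum>j\<in>{0..KK}. sc (c j) * Pj l m j) p = (\<Sum>j\<in>{0..KK}. c j * Vf l m (gP l m j) p)"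
    by (simp add: coord_sum coord_scale coord_Pj)
  also have "\<dots> = Vf l m (\<lambda>s. \<Sum>j\<in>{0..KK}. c j * gP l m j s) p"
    by (simp add: Vf_def sum_divide_distrib)
  finally show "crd (\<Sum>j\<in>{0..KK}. sc (c j) * Pj l m j) p = Vf l m (\<lambda>s. \<Sum>j\<in>{0..KK}. c j * gP l m j s) p" .
qed

lemma Pj_alt: "sc (c j) * z n ^ (l - j) * w n ^ (m - j) * Q z w n ^ j = sc (c j) * Pj l m j"
  by (simp add: Pj_def mult.assoc)

lemma main_iff:
  assumes phi: "\<phi> \<in> Zlm n sc z w l m"
  shows "Uinv n q sc z w 1 \<phi> \<longleftrightarrow>
    (\<exists>c :: nat \<Rightarrow> complex. \<phi> = (\<Sum>j\<in>{0..min l m}. sc (c j) * z n ^ (l - j) * w n ^ (m - j) * Q z w n ^ j))"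
proof
  assume U: "Uinv n q sc z w 1 \<phi>"
  obtain g where g: "crd \<phi> = Vf l m g" using nec[OF phi U] by blast
  obtain c where c: "\<forall>s\<le>KK. g s = (\<Sum>j\<in>{0..KK}. c j * gP l m j s)"
    using tri_solve[of "gP l m", OF gP_z gP_nz] by blast
  have "crd \<phi> = crd (\<Sum>j\<in>{0..KK}. sc (c j) * Pj l m j)"
    unfolding g coord_comb by (rule Vf_cong) (use c in auto)
  then have "\<phi> = (\<Sum>j\<in>{0..KK}. sc (c j) * Pj l m j)" by (rule coord_inj)
  then show "\<exists>c :: nat \<Rightarrow> complex. \<phi> = (\<Sum>j\<in>{0..min l m}. sc (c j) * z n ^ (l - j) * w n ^ (m - j) * Q z w n ^ j)"
    unfolding Pj_alt by blast
next
  assume "\<exists>c :: nat \<Rightarrow> complex. \<phi> = (\<Sum>j\<in>{0..min l m}. sc (c j) * z n ^ (l - j) * w n ^ (m - j) * Q z w n ^ j)"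
  then obtain c where c: "\<phi> = (\<Sum>j\<in>{0..KK}. sc (c j) * Pj l m j)" unfolding Pj_alt by blast
  have "crd \<phi> = Vf l m (\<lambda>s. \<Sum>j\<in>{0..KK}. c j * gP l m j s)" unfolding c by (rule coord_comb)
  then show "Uinv n q sc z w 1 \<phi>" using Vf_suff by blast
qed

lemma indep_aux:
  assumes "(\<Sum>j\<in>{0..KK}. sc (c j) * Pj l m j) = 0"
  shows "\<forall>j\<le>KK. c j = 0"
proof -
  have V: "Vf l m (\<lambda>s. \<Sum>j\<in>{0..KK}. c j * gP l m j s) = (\<lambda>p. 0)"
    using coord_comb[of c] assms coord_zero by simp
  have "\<forall>s\<le>KK. (\<Sum>j\<in>{0..KK}. c j * gP l m j s) = 0"
  proof (intro allI impI)
    fix s assume s: "s \<le> KK"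
    have "Vf l m (\<lambda>s. \<Sum>j\<in>{0..KK}. c j * gP l m j s) (bfun l s, bfun m s) = 0" using V by simp
    then show "(\<Sum>j\<in>{0..KK}. c j * gP l m j s) = 0" using Vf_bp[OF s] Wt_nzc by simp
  qed
  then show ?thesis using tri_unique[of "gP l m", OF gP_z gP_nz] by blast
qed

lemma Pj_inj: "inj_on (Pj l m) {0..KK}"
proof (rule inj_onI)
  fix i j assume i: "i \<in> {0..KK}" and j: "j \<in> {0..KK}" and e: "Pj l m i = Pj l m j"
  have ci: "crd (Pj l m i) = Vf l m (gP l m i)" using i by (intro coord_Pj) auto
  have cj: "crd (Pj l m j) = Vf l m (gP l m j)" using j by (intro coord_Pj) auto
  have V: "Vf l m (gP l m i) = Vf l m (gP l m j)" using ci cj e by simp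
  have G: "gP l m i s = gP l m j s" if "s \<le> KK" for s
    using fun_cong[OF V, of "(bfun l s, bfun m s)"] Vf_bp[OF that] Wt_nzc by simp
  show "i = j"
  proof (rule ccontr)
    assume "i \<noteq> j"
    then consider "i < j" | "j < i" by linarith
    then show False
    proof cases
      case 1 then show False using G[of j] j gP_z[of i j] gP_nz[of j] by auto
    next
      case 2 then show False using G[of i] i gP_z[of j i] gP_nz[of i] by auto
    qed
  qed
qed

lemma main_dim:
  "vector_space.dim (\<lambda>a x. sc a * x) {\<phi>\<in>Zlm n sc z w l m. Uinv n q sc z w 1 \<phi>} = min l m + 1"
proof -
  interpret vs: vector_space "\<lambda>a x. sc a * x"
    by unfold_locales (simp_all add: distrib_left distrib_right sc_add sc_left)
  define V where "V = {\<phi>\<in>Zlm n sc z w l m. Uinv n q sc z w 1 \<phi>}"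
  define B where "B = Pj l m ` {0..KK}"
  have PV: "Pj l m j \<in> V" if "j \<in> {0..KK}" for j
    using Vf_suff[OF coord_Pj] that by (auto simp: V_def)
  have "B \<subseteq> V" using PV by (auto simp: B_def)
  moreover have "V \<subseteq> vs.span B"
  proof
    fix \<phi> assume "\<phi> \<in> V"
    then obtain c where c: "\<phi> = (\<Sum>j\<in>{0..KK}. sc (c j) * Pj l m j)"
      using main_iff by (auto simp: V_def Pj_alt)
    show "\<phi> \<in> vs.span B" unfolding c
      by (intro vs.span_sum vs.span_scale vs.span_base) (auto simp: B_def)
  qed
  moreover have "vs.independent B"
  proof
    assume "vs.dependent B"
    then obtain T u where T: "finite T" "T \<subseteq> B" "(\<Sum>v\<in>T. sc (u v) * v) = 0" and v0: "\<exists>v\<in>T. u v \<noteq> 0"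
      unfolding vs.dependent_explicit by blast
    define J where "J = {j\<in>{0..KK}. Pj l m j \<in> T}"
    have TJ: "T = Pj l m ` J" using T(2) by (auto simp: B_def J_def)
    have injJ: "inj_on (Pj l m) J" using Pj_inj by (rule inj_on_subset) (auto simp: J_def)
    define c where "c j = (if j \<in> J then u (Pj l m j) else 0)" for j
    have "(\<Sum>j\<in>{0..KK}. sc (c j) * Pj l m j) = (\<Sum>j\<in>J. sc (c j) * Pj l m j)"
      by (rule sum.mono_neutral_right) (auto simp: c_def J_def)
    also have "\<dots> = (\<Sum>j\<in>J. sc (u (Pj l m j)) * Pj l m j)" by (rule sum.cong) (auto simp: c_def)
    also have "\<dots> = (\<Sum>v\<in>T. sc (u v) * v)" unfolding TJ by (simp add: sum.reindex[OF injJ])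
    also have "\<dots> = 0" by (rule T(3))
    finally have "\<forall>j\<le>KK. c j = 0" by (rule indep_aux)
    moreover obtain v where "v \<in> T" "u v \<noteq> 0" using v0 by blast
    then obtain j where "j \<in> J" "v = Pj l m j" using TJ by blast
    ultimately show False using \<open>u v \<noteq> 0\<close> by (auto simp: c_def J_def)
  qed
  moreover have "card B = min l m + 1" unfolding B_def using card_image[OF Pj_inj] by simp
  ultimately show ?thesis unfolding V_def[symmetric] by (rule vs.dim_unique)
qed

end
end

theorem proposition2p2p9:
  fixes n :: nat and q :: real and sc :: "complex \<Rightarrow> 'a::ring_1"
    and z w :: "nat \<Rightarrow> 'a" and l m :: nat
  assumes "0 < q" and "q < 1" and "2 \<le> n"
    and "Zn_alg n q sc z w"
  shows "(\<forall>\<phi>\<in>Zlm n sc z w l m.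
           Uinv n q sc z w 1 \<phi> \<longleftrightarrow>
           (\<exists>c :: nat \<Rightarrow> complex.
              \<phi> = (\<Sum>j\<in>{0..min l m}. sc (c j) * z n ^ (l - j) * w n ^ (m - j) * Q z w n ^ j))) \<and>
         vector_space.dim (\<lambda>a x. sc a * x) {\<phi>\<in>Zlm n sc z w l m. Uinv n q sc z w 1 \<phi>} = min l m + 1"
proof -
  interpret ZN n q sc z w using assms by unfold_locales
  show ?thesis using main_iff[of _ l m] main_dim[of l m] by blast
qed

end
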